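(* Let $(\Gamma,c)$ be a real Fuchsian group and $\gamma\in\Gamma$ an admissible element. Then the twisted centralizer $Z_\gamma$ is either trivial, cyclic of order two, infinite cyclic, or infinite dihedral (i.e. $\mathbf{Z}/2\mathbf{Z}\ltimes\mathbf{Z}$).
   Context: $\mathfrak{h}$ is the upper half-plane. A complex conjugation is an anti-holomorphic involution $c$ of $\mathfrak{h}$; for $\gamma\in\mathrm{PSL}_2(\mathbf{R})$, $\gamma^c=c\gamma c$. A real Fuchsian group is a pair $(\Gamma,c)$ with $\Gamma\subseteq\mathrm{PSL}_2(\mathbf{R})$ discrete, $c$ a complex conjugation, $\Gamma^c=\Gamma$, and $\mathfrak{h}^*/\Gamma$ compact, where $\mathfrak{h}^*$ is $\mathfrak{h}$ with the cusps of $\Gamma$ adjoined. $\gamma\in\Gamma$ is admissible if $\gamma^c=\gamma^{-1}$. The twisted centralizer of $\gamma$ is $Z_\gamma=\{\sigma\in\Gamma:\sigma^c\gamma\sigma^{-1}=\gamma\}$. *)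

theory Defs
  imports "HOL-Analysis.Analysis" "HOL-Algebra.Algebra"
begin

definition uhp :: "complex set" where
  "uhp = {z. 0 < Im z}"

text \<open>An element of PSL_2(R) is represented by the Moebius map it induces on the
  upper half-plane (extended by the identity off the half-plane, so that equality of
  group elements is equality of functions).  The matrices M and -M give the same map.\<close>

definition mob :: "real \<Rightarrow> real \<Rightarrow> real \<Rightarrow> real \<Rightarrow> complex \<Rightarrow> complex" where
  "mob a b c d = (\<lambda>z. if 0 < Im z
      then (of_real a * z + of_real b) / (of_real c * z + of_real d) else z)"

definition PSL2R :: "(complex \<Rightarrow> complex) set" where
  "PSL2R = {mob a b c d | a b c d. a * d - b * c = 1}"

definition PSL2R_group :: "(complex \<Rightarrow> complex) monoid" where
  "PSL2R_group = \<lparr>carrier = PSL2R, monoid.mult = (\<circ>), one = id\<rparr>"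

text \<open>A representing matrix (determined up to sign).\<close>
definition psl_rep :: "(complex \<Rightarrow> complex) \<Rightarrow> real \<times> real \<times> real \<times> real" where
  "psl_rep g = (SOME (a, b, c, d). a * d - b * c = 1 \<and> g = mob a b c d)"

text \<open>Action on the closure of the upper half-plane in the Riemann sphere;
  \<open>None\<close> is the point at infinity.\<close>
definition ext_act :: "(complex \<Rightarrow> complex) \<Rightarrow> complex option \<Rightarrow> complex option" where
  "ext_act g p = (case psl_rep g of (a, b, c, d) \<Rightarrow>
     (case p of
        None \<Rightarrow> (if c = 0 then None else Some (of_real (a / c)))
      | Some z \<Rightarrow> (if 0 < Im z then Some (g z)
                   else if of_real c * z + of_real d = 0 then None
                   else Some ((of_real a * z + of_real b) / (of_real c * z + of_real d)))))"

definition parabolic :: "(complex \<Rightarrow> complex) \<Rightarrow> bool" where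
  "parabolic g \<longleftrightarrow> g \<noteq> id \<and> (case psl_rep g of (a, b, c, d) \<Rightarrow> \<bar>a + d\<bar> = 2)"

definition discrete_psl :: "(complex \<Rightarrow> complex) set \<Rightarrow> bool" where
  "discrete_psl \<Gamma> \<longleftrightarrow> (\<exists>\<epsilon>>0. \<forall>a b c d. a * d - b * c = 1 \<and> mob a b c d \<in> \<Gamma> \<and>
      \<bar>a - 1\<bar> < \<epsilon> \<and> \<bar>b\<bar> < \<epsilon> \<and> \<bar>c\<bar> < \<epsilon> \<and> \<bar>d - 1\<bar> < \<epsilon> \<longrightarrow> mob a b c d = id)"

definition cusps :: "(complex \<Rightarrow> complex) set \<Rightarrow> complex option set" where
  "cusps \<Gamma> = {p. (p = None \<or> (\<exists>x::real. p = Some (of_real x))) \<and>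
                  (\<exists>g\<in>\<Gamma>. parabolic g \<and> ext_act g p = p)}"

definition hstar :: "(complex \<Rightarrow> complex) set \<Rightarrow> complex option set" where
  "hstar \<Gamma> = Some ` uhp \<union> cusps \<Gamma>"

text \<open>The usual (Satake/Shimura) topology on h*: open sets of h, and at a cusp s the
  sets {s} \<union> \<sigma>({Im z > k}) with \<sigma>(\<infinity>) = s.\<close>
definition hstar_topology :: "(complex \<Rightarrow> complex) set \<Rightarrow> complex option topology" where
  "hstar_topology \<Gamma> = topology_generated_by
     ({Some ` U | U. open U \<and> U \<subseteq> uhp} \<union>
      {insert s (Some ` (\<sigma> ` {z. k < Im z})) | s \<sigma> k.
          s \<in> cusps \<Gamma> \<and> \<sigma> \<in> PSL2R \<and> ext_act \<sigma> None = s \<and> 0 < k})"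

definition orbit :: "(complex \<Rightarrow> complex) set \<Rightarrow> complex option \<Rightarrow> complex option set" where
  "orbit \<Gamma> p = {ext_act g p | g. g \<in> \<Gamma>}"

definition compact_quotient :: "(complex \<Rightarrow> complex) set \<Rightarrow> bool" where
  "compact_quotient \<Gamma> \<longleftrightarrow>
     (\<exists>(Y :: complex option set topology) \<pi>. quotient_map (hstar_topology \<Gamma>) Y \<pi> \<and>
        (\<forall>p\<in>hstar \<Gamma>. \<forall>q\<in>hstar \<Gamma>. \<pi> p = \<pi> q \<longleftrightarrow> q \<in> orbit \<Gamma> p) \<and>
        compact_space Y)"

definition complex_conjugation :: "(complex \<Rightarrow> complex) \<Rightarrow> bool" where
  "complex_conjugation c \<longleftrightarrow>
     (\<forall>z\<in>uhp. c z \<in> uhp \<and> c (c z) = z) \<and> (\<lambda>z. cnj (c z)) holomorphic_on uhp"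

definition twist :: "(complex \<Rightarrow> complex) \<Rightarrow> (complex \<Rightarrow> complex) \<Rightarrow> complex \<Rightarrow> complex" where
  "twist c g = (\<lambda>z. if 0 < Im z then c (g (c z)) else z)"

definition real_fuchsian :: "(complex \<Rightarrow> complex) set \<Rightarrow> (complex \<Rightarrow> complex) \<Rightarrow> bool" where
  "real_fuchsian \<Gamma> c \<longleftrightarrow> subgroup \<Gamma> PSL2R_group \<and> discrete_psl \<Gamma> \<and>
     complex_conjugation c \<and> twist c ` \<Gamma> = \<Gamma> \<and> compact_quotient \<Gamma>"

definition admissible :: "(complex \<Rightarrow> complex) \<Rightarrow> (complex \<Rightarrow> complex) \<Rightarrow> bool" where
  "admissible c g \<longleftrightarrow> twist c g = inv\<^bsub>PSL2R_group\<^esub> g"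

definition twisted_centralizer ::
  "(complex \<Rightarrow> complex) set \<Rightarrow> (complex \<Rightarrow> complex) \<Rightarrow> (complex \<Rightarrow> complex) \<Rightarrow> (complex \<Rightarrow> complex) set" where
  "twisted_centralizer \<Gamma> c g = {\<sigma> \<in> \<Gamma>.
      twist c \<sigma> \<otimes>\<^bsub>PSL2R_group\<^esub> g \<otimes>\<^bsub>PSL2R_group\<^esub> inv\<^bsub>PSL2R_group\<^esub> \<sigma> = g}"

text \<open>(n, s) stands for r^n f^s, with f r f = r^-1.\<close>
definition inf_dihedral_group :: "(int \<times> bool) monoid" where
  "inf_dihedral_group = \<lparr>carrier = UNIV,
     monoid.mult = (\<lambda>(a, s) (b, t). (if s then a - b else a + b, s \<noteq> t)),
     one = (0, False)\<rparr>"

end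

theory Submission
  imports Defs "HOL-Complex_Analysis.Complex_Analysis"
begin

lemma den_nz:
  assumes "a * d - b * c = (1::real)" "0 < Im z"
  shows "of_real c * z + of_real d \<noteq> 0"
proof
  assume h: "of_real c * z + of_real d = 0"
  hence "Im (of_real c * z + of_real d) = 0" by simp
  hence "c * Im z = 0" by simp
  hence c0: "c = 0" using assms(2) by simp
  with h have "d = 0" by simp
  with c0 assms(1) show False by simp
qed

lemma Im_frac:
  fixes a b c d :: real
  assumes "of_real c * z + of_real d \<noteq> 0"
  shows "Im ((of_real a * z + of_real b) / (of_real c * z + of_real d)) =
     (a * d - b * c) * Im z / (cmod (of_real c * z + of_real d))^2"
  by (simp add: Im_divide cmod_power2 algebra_simps)

lemma Im_mobf_pos:
  assumes "a * d - b * c = (1::real)" "0 < Im z"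
  shows "0 < Im ((of_real a * z + of_real b) / (of_real c * z + of_real d))"
  using Im_frac[OF den_nz[OF assms]] assms den_nz[OF assms] by simp


definition mf :: "real \<Rightarrow> real \<Rightarrow> real \<Rightarrow> real \<Rightarrow> complex \<Rightarrow> complex" where
  "mf a b c d z = (of_real a * z + of_real b) / (of_real c * z + of_real d)"

lemma mob_mf: "mob a b c d z = (if 0 < Im z then mf a b c d z else z)"
  by (simp add: mob_def mf_def)

lemma mf_uhp: "a * d - b * c = 1 \<Longrightarrow> 0 < Im z \<Longrightarrow> 0 < Im (mf a b c d z)"
  unfolding mf_def by (rule Im_mobf_pos)

lemma mob_uhp: "a * d - b * c = 1 \<Longrightarrow> 0 < Im z \<Longrightarrow> 0 < Im (mob a b c d z)"
  by (simp add: mob_mf mf_uhp)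

lemma mob_in: "a * d - b * c = 1 \<Longrightarrow> mob a b c d \<in> PSL2R"
  unfolding PSL2R_def by blast

lemma mf_comp:
  assumes "a * d - b * c = 1" "a' * d' - b' * c' = 1" "0 < Im z"
  shows "mf a b c d (mf a' b' c' d' z) =
    mf (a * a'+b * c') (a * b'+b * d') (c * a'+d * c') (c * b'+d * d') z"
proof -
  have n1: "of_real c' * z + of_real d' \<noteq> 0" using den_nz[OF assms(2,3)] .
  have n2: "of_real c * mf a' b' c' d' z + of_real d \<noteq> 0"
    using den_nz[OF assms(1) mf_uhp[OF assms(2,3)]] .
  have e: "of_real c * mf a' b' c' d' z + of_real d =
      (of_real (c * a'+d * c') * z + of_real (c * b'+d * d')) / (of_real c' * z + of_real d')"
    using n1 unfolding mf_def by (simp add: field_simps)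
  have n3: "of_real (c * a'+d * c') * z + of_real (c * b'+d * d') \<noteq> 0"
    using n2 e by auto
  have g: "(A * (N/Dn) + B) / (C * (N/Dn) + D) = (A * N + B * Dn) / (C * N + D * Dn)"
    if "Dn \<noteq> 0" for A B C D N Dn :: complex
    using that by (simp add: divide_simps)
  have "mf a b c d (mf a' b' c' d' z) =
     (of_real a * (of_real a' * z + of_real b') + of_real b * (of_real c' * z + of_real d')) /
     (of_real c * (of_real a' * z + of_real b') + of_real d * (of_real c' * z + of_real d'))"
    unfolding mf_def by (rule g[OF n1])
  also have "\<dots> = mf (a * a'+b * c') (a * b'+b * d') (c * a'+d * c') (c * b'+d * d') z"
    unfolding mf_def by (simp add: algebra_simps)
  finally show ?thesis .
qed

lemma mob_comp:
  assumes "a * d - b * c = 1" "a' * d' - b' * c' = 1"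
  shows "mob a b c d \<circ> mob a' b' c' d' =
    mob (a * a'+b * c') (a * b'+b * d') (c * a'+d * c') (c * b'+d * d')"
proof
  fix z show "(mob a b c d \<circ> mob a' b' c' d') z =
    mob (a * a'+b * c') (a * b'+b * d') (c * a'+d * c') (c * b'+d * d') z"
    using mf_comp[OF assms, of z] mf_uhp[OF assms(2), of z]
    by (simp add: mob_mf)
qed

lemma mob_id: "mob 1 0 0 1 = id"
  by (auto simp: mob_def)

lemma mob_neg: "mob (-a) (-b) (-c) (-d) = mob a b c d"
proof
  fix z :: complex
  have "(- of_real a * z - of_real b) / (- of_real c * z - of_real d)
     = (of_real a * z + of_real b) / (of_real c * z + of_real d)" (is "?l = ?r")
  proof -
    have n: "- of_real c * z - of_real d = - (of_real c * z + of_real d)"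
      by (simp only: minus_add_distrib mult_minus_left diff_conv_add_uminus)
    have m: "- of_real a * z - of_real b = - (of_real a * z + of_real b)"
      by (simp only: minus_add_distrib mult_minus_left diff_conv_add_uminus)
    show ?thesis unfolding n m by (rule minus_divide_divide)
  qed
  then show "mob (-a) (-b) (-c) (-d) z = mob a b c d z" by (simp add: mob_def)
qed

lemma mob_eq_id:
  assumes "a * d - b * c = 1" "mob a b c d = id"
  shows "b = 0 \<and> c = 0 \<and> d = a \<and> (a = 1 \<or> a = -1)"
proof -
  have h: "mf a b c d z = z" if "0 < Im z" for z
    using fun_cong[OF assms(2), of z] that by (simp add: mob_mf)
  have key: "of_real a * z + of_real b = z * (of_real c * z + of_real d)" if "0 < Im z" for z
    using h[OF that] den_nz[OF assms(1) that] unfolding mf_def by (simp add: field_simps)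
  have k1: "of_real a * \<i> + of_real b = \<i> * (of_real c * \<i> + of_real d)" using key[of "\<i>"] by simp
  have k2: "of_real a * (2*\<i>) + of_real b = (2*\<i>) * (of_real c * (2*\<i>) + of_real d)" using key[of "2*\<i>"] by simp
  from k1 have r1: "b = - c" and i1: "a = d"
    using complex_eq_iff[THEN iffD1, OF k1] by (simp_all add: algebra_simps)
  from k2 have r2: "b = - 4 * c"
    using complex_eq_iff[THEN iffD1, OF k2] by (simp_all add: algebra_simps)
  have "c = 0" using r1 r2 by simp
  moreover have "b = 0" using r1 \<open>c = 0\<close> by simp
  moreover have "a * a = 1" using assms(1) i1 \<open>c = 0\<close> by simp
  ultimately show ?thesis using i1
    by (metis mult_cancel_right1 square_eq_1_iff)
qed


lemma mob_inv_comp: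
  assumes "a * d - b * c = 1"
  shows "mob d (-b) (-c) a \<circ> mob a b c d = id" "mob a b c d \<circ> mob d (-b) (-c) a = id"
proof -
  have d: "d * a - (-b) * (-c) = 1" using assms by (simp add: algebra_simps)
  show "mob d (-b) (-c) a \<circ> mob a b c d = id"
    using mob_comp[OF d assms] assms mob_id by (simp add: algebra_simps)
  show "mob a b c d \<circ> mob d (-b) (-c) a = id"
    using mob_comp[OF assms d] assms mob_id by (simp add: algebra_simps)
qed

lemma PSL2R_group_is_group: "group PSL2R_group"
proof (rule groupI)
  fix x y assume "x \<in> carrier PSL2R_group" "y \<in> carrier PSL2R_group"
  then obtain a b c d a' b' c' d' where x: "x = mob a b c d" "a * d - b * c = 1"
    and y: "y = mob a' b' c' d'" "a' * d' - b' * c' = 1"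
    by (auto simp: PSL2R_group_def PSL2R_def)
  have "(c * a' + d * c') * (c * b' + d * d') \<noteq> 0 \<or> True" by simp
  have det: "(a * a' + b * c') * (c * b' + d * d') - (a * b' + b * d') * (c * a' + d * c') = 1"
  proof -
    have "(a * a' + b * c') * (c * b' + d * d') - (a * b' + b * d') * (c * a' + d * c')
      = (a * d - b * c) * (a' * d' - b' * c')" by (simp add: algebra_simps)
    then show ?thesis using x y by simp
  qed
  show "x \<otimes>\<^bsub>PSL2R_group\<^esub> y \<in> carrier PSL2R_group"
    using mob_comp[OF x(2) y(2)] det x y
    by (auto simp: PSL2R_group_def intro!: mob_in)
next
  show "\<one>\<^bsub>PSL2R_group\<^esub> \<in> carrier PSL2R_group"
    using mob_in[of 1 1 0 0] mob_id by (simp add: PSL2R_group_def)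
next
  fix x y z show "x \<otimes>\<^bsub>PSL2R_group\<^esub> y \<otimes>\<^bsub>PSL2R_group\<^esub> z =
      x \<otimes>\<^bsub>PSL2R_group\<^esub> (y \<otimes>\<^bsub>PSL2R_group\<^esub> z)"
    by (simp add: PSL2R_group_def o_assoc)
next
  fix x show "\<one>\<^bsub>PSL2R_group\<^esub> \<otimes>\<^bsub>PSL2R_group\<^esub> x = x"
    by (simp add: PSL2R_group_def)
next
  fix x assume "x \<in> carrier PSL2R_group"
  then obtain a b c d where x: "x = mob a b c d" "a * d - b * c = 1"
    by (auto simp: PSL2R_group_def PSL2R_def)
  have d: "d * a - (-b) * (-c) = 1" using x by (simp add: algebra_simps)
  show "\<exists>y\<in>carrier PSL2R_group. y \<otimes>\<^bsub>PSL2R_group\<^esub> x = \<one>\<^bsub>PSL2R_group\<^esub>"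
    using mob_inv_comp[OF x(2)] mob_in[OF d] x
    by (auto simp: PSL2R_group_def)
qed

lemma G_mult[simp]: "x \<otimes>\<^bsub>PSL2R_group\<^esub> y = x \<circ> y"
  by (simp add: PSL2R_group_def)
lemma G_one[simp]: "\<one>\<^bsub>PSL2R_group\<^esub> = id"
  by (simp add: PSL2R_group_def)
lemma G_carrier[simp]: "carrier PSL2R_group = PSL2R"
  by (simp add: PSL2R_group_def)

lemma mob_inv:
  assumes "a * d - b * c = 1"
  shows "inv\<^bsub>PSL2R_group\<^esub> (mob a b c d) = mob d (-b) (-c) a"
proof -
  have d: "d * a - (-b) * (-c) = 1" using assms by (simp add: algebra_simps)
  show ?thesis
    by (rule group.inv_equality[OF PSL2R_group_is_group])
       (use mob_inv_comp[OF assms] mob_in[OF d] mob_in[OF assms] in auto)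
qed

lemma mob_eq:
  assumes "a * d - b * c = 1" "a' * d' - b' * c' = 1" "mob a b c d = mob a' b' c' d'"
  shows "(a = a' \<and> b = b' \<and> c = c' \<and> d = d') \<or> (a = -a' \<and> b = -b' \<and> c = -c' \<and> d = -d')"
proof -
  have d: "d' * a' - (-b') * (-c') = 1" using assms by (simp add: algebra_simps)
  define p where "p = d' * a + (-b') * c"
  define q where "q = d' * b + (-b') * d"
  define r where "r = (-c') * a + a' * c"
  define s where "s = (-c') * b + a' * d"
  have dp: "p * s - q * r = 1"
  proof -
    have "p * s - q * r = (a * d - b * c) * (d' * a' - (-b') * (-c'))"
      unfolding p_def q_def r_def s_def by (simp add: algebra_simps)
    then show ?thesis using assms d by simp
  qed
  have "mob p q r s = mob d' (-b') (-c') a' \<circ> mob a b c d"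
    using mob_comp[OF d assms(1)] unfolding p_def q_def r_def s_def by simp
  also have "\<dots> = id" using assms(3) mob_inv_comp[OF assms(2)] by simp
  finally have "q = 0 \<and> r = 0 \<and> s = p \<and> (p = 1 \<or> p = -1)" using mob_eq_id[OF dp] by blast
  moreover have "a' * p + b' * r = a * (a' * d' - b' * c')" "a' * q + b' * s = b * (a' * d' - b' * c')"
     "c' * p + d' * r = c * (a' * d' - b' * c')" "c' * q + d' * s = d * (a' * d' - b' * c')"
    unfolding p_def q_def r_def s_def by (simp_all add: algebra_simps)
  then have "a = a' * p + b' * r" "b = a' * q + b' * s" "c = c' * p + d' * r" "d = c' * q + d' * s"
    using assms(2) by simp_all
  ultimately show ?thesis by auto
qed


lemma zi_nz: assumes "0 < Im z" shows "z + \<i> \<noteq> 0"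
proof
  assume "z + \<i> = 0"
  then have "Im (z + \<i>) = 0" by simp
  with assms show False by simp
qed

definition Cy :: "complex \<Rightarrow> complex" where "Cy z = (z - \<i>) / (z + \<i>)"
definition Ci :: "complex \<Rightarrow> complex" where "Ci w = \<i> * (1 + w) / (1 - w)"

lemma Cy_ball: assumes "0 < Im z" shows "Cy z \<in> ball 0 1"
proof -
  have nz: "z + \<i> \<noteq> 0" using zi_nz[OF assms] .
  have e1: "(cmod (z - \<i>))^2 = (Re z)^2 + (Im z - 1)^2" by (simp add: cmod_power2)
  have e2: "(cmod (z + \<i>))^2 = (Re z)^2 + (Im z + 1)^2" by (simp add: cmod_power2)
  have "(Im z - 1)^2 < (Im z + 1)^2" using assms by (simp add: power2_eq_square algebra_simps)
  hence "(cmod (z - \<i>))^2 < (cmod (z + \<i>))^2" using e1 e2 by simp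
  hence "cmod (z - \<i>) < cmod (z + \<i>)" by (simp add: power_less_imp_less_base)
  thus ?thesis using nz by (simp add: Cy_def norm_divide divide_less_eq)
qed

lemma Ci_uhp: assumes "w \<in> ball 0 1" shows "0 < Im (Ci w)"
proof -
  have n: "cmod w < 1" using assms by simp
  have nz: "1 - w \<noteq> 0" using n by auto
  have "Im (Ci w) = (1 - ((Re w)^2 + (Im w)^2)) / ((1 - Re w)^2 + (Im w)^2)"
    using nz by (simp add: Ci_def Im_divide algebra_simps power2_eq_square)
  moreover have "(Re w)^2 + (Im w)^2 < 1"
  proof -
    have "(cmod w)^2 < 1^2" by (rule power_strict_mono) (use n in auto)
    then show ?thesis by (simp add: cmod_power2)
  qed
  moreover have "(1 - Re w)^2 + (Im w)^2 > 0"
  proof -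
    have "0 < (cmod (1 - w))^2" using nz by simp
    then show ?thesis by (simp add: cmod_power2)
  qed
  ultimately show ?thesis by simp
qed

lemma Ci_Cy: assumes "0 < Im z" shows "Ci (Cy z) = z"
proof -
  have nz: "z + \<i> \<noteq> 0" using zi_nz[OF assms] .
  have nz2: "\<i> * z * 2 - 2 \<noteq> 0"
  proof
    assume "\<i> * z * 2 - 2 = 0"
    hence "Re (\<i> * z * 2 - 2) = 0" by simp
    hence "Im z = -1" by simp
    thus False using assms by simp
  qed
  have "(\<i> * (z * (z * 2)) - z * 2) = z * (\<i> * z * 2 - 2)" by (simp add: algebra_simps)
  then show ?thesis using nz nz2 by (simp add: Ci_def Cy_def field_simps)
qed

lemma Cy_Ci: assumes "w \<in> ball 0 1" shows "Cy (Ci w) = w"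
proof -
  have nz: "1 - w \<noteq> 0" using assms by auto
  show ?thesis using nz by (simp add: Ci_def Cy_def field_simps)
qed

lemma Cy_hol: "Cy holomorphic_on uhp"
  unfolding Cy_def uhp_def
  by (intro holomorphic_intros) (use zi_nz in auto)

lemma Ci_hol: "Ci holomorphic_on ball 0 1"
  unfolding Ci_def
  by (intro holomorphic_intros) auto


lemma rot_identity:
  fixes u v :: real and z :: complex
  assumes uv: "u^2 + v^2 = 1" and zi: "0 < Im z"
  shows "Ci ((Complex u v)^2 * Cy z) = mf u v (-v) u z"
proof -
  define \<beta> where "\<beta> = Complex u v"
  have b: "\<beta> = of_real u + \<i> * of_real v" by (simp add: \<beta>_def complex_eq_iff)
  have nz: "z + \<i> \<noteq> 0" using zi
    by (rule zi_nz)
  have one: "(of_real u)^2 + (of_real v)^2 = (1::complex)"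
    by (metis of_real_add of_real_1 of_real_power uv)
  have ii: "\<i> * \<i> = (-1::complex)" by simp
  have N: "\<i> * ((z + \<i>) + \<beta>^2 * (z - \<i>)) = 2 * \<i> * \<beta> * (of_real u * z + of_real v)"
    unfolding \<beta>_def using uv by (simp add: complex_eq_iff power2_eq_square algebra_simps) (safe; Groebner_Basis.algebra)
  have D: "(z + \<i>) - \<beta>^2 * (z - \<i>) = 2 * \<i> * \<beta> * (of_real (-v) * z + of_real u)"
    unfolding \<beta>_def using uv by (simp add: complex_eq_iff power2_eq_square algebra_simps) (safe; Groebner_Basis.algebra)
  have bnz: "\<beta> \<noteq> 0" using uv by (auto simp: \<beta>_def complex_eq_iff)
  have dnz: "of_real (-v) * z + of_real u \<noteq> 0"
    using den_nz[where a=u and b=v and c="-v" and d=u and z=z] uv zi by (simp add: power2_eq_square)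
  have "Ci (\<beta>^2 * Cy z) = \<i> * ((z + \<i>) + \<beta>^2 * (z - \<i>)) / ((z + \<i>) - \<beta>^2 * (z - \<i>))"
  proof -
    have e1: "1 + \<beta>^2 * Cy z = ((z + \<i>) + \<beta>^2 * (z - \<i>)) / (z + \<i>)"
      using nz unfolding Cy_def by (simp add: field_simps)
    have e2: "1 - \<beta>^2 * Cy z = ((z + \<i>) - \<beta>^2 * (z - \<i>)) / (z + \<i>)"
      using nz unfolding Cy_def by (simp add: field_simps)
    show ?thesis unfolding Ci_def e1 e2 using nz by simp
  qed
  also have "\<dots> = (2 * \<i> * \<beta> * (of_real u * z + of_real v)) / (2 * \<i> * \<beta> * (of_real (-v) * z + of_real u))"
    using N D by simp
  also have "\<dots> = mf u v (-v) u z" using bnz unfolding mf_def by simp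
  finally show ?thesis by (simp add: \<beta>_def)
qed


lemma aut_uhp:
  assumes holF: "F holomorphic_on uhp" and Fin: "\<And>z. 0 < Im z \<Longrightarrow> 0 < Im (F z)"
      and holG: "G holomorphic_on uhp" and Gin: "\<And>z. 0 < Im z \<Longrightarrow> 0 < Im (G z)"
      and GF: "\<And>z. 0 < Im z \<Longrightarrow> G (F z) = z"
  shows "\<exists>a b c d. a * d - b * c = 1 \<and> (\<forall>z. 0 < Im z \<longrightarrow> F z = mf a b c d z)"
proof -
  define x where "x = Re (F \<i>)"
  define y where "y = Im (F \<i>)"
  have y0: "0 < y" using Fin[of \<i>] by (simp add: y_def)
  define F1 where "F1 z = (F z - of_real x) / of_real y" for z
  define G1 where "G1 z = G (of_real x + of_real y * z)" for z
  have uhp_open: "open uhp" unfolding uhp_def using open_halfspace_Im_gt[of 0] by simp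
  have F1in: "0 < Im (F1 z)" if "0 < Im z" for z
    using Fin[OF that] y0 by (simp add: F1_def)
  have aff: "0 < Im (of_real x + of_real y * z)" if "0 < Im z" for z
    using that y0 by simp
  have G1in: "0 < Im (G1 z)" if "0 < Im z" for z
    using Gin[OF aff[OF that]] by (simp add: G1_def)
  have G1F1: "G1 (F1 z) = z" if "0 < Im z" for z
  proof -
    have "of_real x + of_real y * F1 z = F z" using y0 by (simp add: F1_def)
    then show ?thesis using GF[OF that] by (simp add: G1_def)
  qed
  have F1i: "F1 \<i> = \<i>"
    using y0 by (simp add: F1_def x_def y_def complex_eq_iff)
  have holF1: "F1 holomorphic_on uhp"
    unfolding F1_def using y0 by (intro holomorphic_intros holF) auto
  have holG1: "G1 holomorphic_on uhp"
  proof -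
    have "(G \<circ> (\<lambda>z. of_real x + of_real y * z)) holomorphic_on uhp"
      by (rule holomorphic_on_compose_gen[OF _ holG]) (use y0 in \<open>auto intro!: holomorphic_intros simp: uhp_def\<close>)
    then show ?thesis by (simp add: G1_def[abs_def] o_def)
  qed
  define D where "D = Cy \<circ> F1 \<circ> Ci"
  define E where "E = Cy \<circ> G1 \<circ> Ci"
  have CiU: "Ci ` ball 0 1 \<subseteq> uhp" using Ci_uhp by (auto simp: uhp_def)
  have F1U: "F1 ` uhp \<subseteq> uhp" using F1in by (auto simp: uhp_def)
  have G1U: "G1 ` uhp \<subseteq> uhp" using G1in by (auto simp: uhp_def)
  have holD: "D holomorphic_on ball 0 1"
    unfolding D_def
    by (rule holomorphic_on_compose_gen[OF Ci_hol holomorphic_on_compose_gen[OF holF1 Cy_hol F1U] CiU])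
  have holE: "E holomorphic_on ball 0 1"
    unfolding E_def
    by (rule holomorphic_on_compose_gen[OF Ci_hol holomorphic_on_compose_gen[OF holG1 Cy_hol G1U] CiU])
  have Ci0: "Ci 0 = \<i>" by (simp add: Ci_def)
  have Cyi: "Cy \<i> = 0" by (simp add: Cy_def)
  have D0: "D 0 = 0" by (simp add: D_def Ci0 F1i Cyi)
  have Dball: "norm (D z) < 1" if "norm z < 1" for z
    using Cy_ball[OF F1in[OF Ci_uhp]] that by (simp add: D_def)
  have E0: "E 0 = 0"
  proof -
    have "G1 \<i> = \<i>" using G1F1[of \<i>] F1i by simp
    then show ?thesis by (simp add: E_def Ci0 Cyi)
  qed
  have Eball: "norm (E z) < 1" if "norm z < 1" for z
    using Cy_ball[OF G1in[OF Ci_uhp]] that by (simp add: E_def)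
  have ED: "E (D z) = z" if "norm z < 1" for z
  proof -
    have "Ci (Cy (F1 (Ci z))) = F1 (Ci z)" by (rule Ci_Cy[OF F1in[OF Ci_uhp]]) (use that in simp)
    then show ?thesis
      using G1F1[OF Ci_uhp, of z] Cy_Ci[of z] that by (simp add: D_def E_def)
  qed
  define h :: complex where "h = 1/2"
  have h1: "norm h < 1" "h \<noteq> 0" by (simp_all add: h_def)
  have le1: "norm (D h) \<le> norm h" by (rule Schwarz_Lemma(1)[OF holD D0 Dball h1(1)])
  have le2: "norm (E (D h)) \<le> norm (D h)"
    by (rule Schwarz_Lemma(1)[OF holE E0 Eball]) (use Dball h1 in auto)
  have "norm (D h) = norm h" using le1 le2 ED[OF h1(1)] by simp
  then obtain \<alpha> where al: "\<And>z. norm z < 1 \<Longrightarrow> D z = \<alpha> * z" and an: "norm \<alpha> = 1"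
    using Schwarz_Lemma(3)[OF holD D0 Dball h1(1)] h1 by blast
  define \<beta> where "\<beta> = csqrt \<alpha>"
  define u where "u = Re \<beta>"
  define v where "v = Im \<beta>"
  have bsq: "(Complex u v)^2 = \<alpha>" unfolding u_def v_def complex.collapse \<beta>_def by (rule power2_csqrt)
  have nb: "norm \<beta> = 1" using an by (simp add: \<beta>_def)
  have uv: "u^2 + v^2 = 1" using nb by (simp add: u_def v_def cmod_def)
  have F1form: "F1 z = mf u v (-v) u z" if "0 < Im z" for z
  proof -
    have cz: "norm (Cy z) < 1" using Cy_ball[OF that] by simp
    have "D (Cy z) = Cy (F1 z)" using Ci_Cy[OF that] by (simp add: D_def)
    hence "Cy (F1 z) = \<alpha> * Cy z" using al[OF cz] by simp
    hence "Ci (Cy (F1 z)) = Ci ((Complex u v)^2 * Cy z)" using bsq by simp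
    then show ?thesis using Ci_Cy[OF F1in[OF that]] rot_identity[OF uv that] by simp
  qed
  define s where "s = sqrt y"
  have s0: "0 < s" using y0 by (simp add: s_def)
  have ss: "s * s = y" using y0 by (simp add: s_def)
  define a where "a = (y * u - x * v) / s"
  define b where "b = (x * u + y * v) / s"
  define c where "c = - v / s"
  define d where "d = u / s"
  have det: "a * d - b * c = 1"
  proof -
    have "a * d - b * c = y * (u^2 + v^2) / (s * s)"
      using s0 by (simp add: a_def b_def c_def d_def field_simps power2_eq_square)
    then show ?thesis using uv ss y0 by simp
  qed
  have "F z = mf a b c d z" if "0 < Im z" for z
  proof -
    have dn: "of_real (-v) * z + of_real u \<noteq> 0"
      using den_nz[where a=u and b=v and c="-v" and d=u and z=z] uv that by (simp add: power2_eq_square)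
    have "F z = of_real x + of_real y * F1 z" using y0 by (simp add: F1_def)
    also have "\<dots> = of_real x + of_real y * mf u v (-v) u z" using F1form[OF that] by simp
    also have "\<dots> = mf a b c d z"
      using dn s0 unfolding mf_def a_def b_def c_def d_def
      by (simp add: field_simps of_real_divide)
    finally show ?thesis .
  qed
  then show ?thesis using det by blast
qed


definition st :: "(complex \<Rightarrow> complex) \<Rightarrow> complex \<Rightarrow> complex" where
  "st g z = (if 0 < Im z then - cnj (g (- cnj z)) else z)"

lemma st_mob: "st (mob a b c d) = mob a (-b) (-c) d"
proof
  fix z :: complex
  show "st (mob a b c d) z = mob a (-b) (-c) d z"
  proof (cases "0 < Im z")
    case True
    have e: "cnj ((of_real a * (- cnj z) + of_real b) / (of_real c * (- cnj z) + of_real d))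
        = (of_real a * (- z) + of_real b) / (of_real c * (- z) + of_real d)"
      by (simp add: complex_cnj_divide)
    have "- ((of_real a * (- z) + of_real b) / (of_real c * (- z) + of_real d))
        = (of_real a * z + of_real (-b)) / (of_real (-c) * z + of_real d)"
    proof -
      have n1: "-(of_real a * (- z) + of_real b) = of_real a * z + of_real (-b)" by simp
      have n2: "of_real c * (- z) + of_real d = of_real (-c) * z + of_real d" by simp
      show ?thesis unfolding minus_divide_left n1 n2 ..
    qed
    then show ?thesis using True e by (simp add: st_def mob_def)
  next
    case False then show ?thesis by (simp add: st_def mob_def)
  qed
qed

lemma PSL2R_E: assumes "g \<in> PSL2R" obtains a b c d where "a * d - b * c = 1" "g = mob a b c d"
  using assms unfolding PSL2R_def by blast

lemma PSL2R_uhp: "g \<in> PSL2R \<Longrightarrow> 0 < Im z \<Longrightarrow> 0 < Im (g z)"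
  by (erule PSL2R_E) (simp add: mob_uhp)

lemma PSL2R_off: "g \<in> PSL2R \<Longrightarrow> \<not> 0 < Im z \<Longrightarrow> g z = z"
  by (erule PSL2R_E) (simp add: mob_def)

lemma st_in: "g \<in> PSL2R \<Longrightarrow> st g \<in> PSL2R"
  by (erule PSL2R_E) (simp add: st_mob mob_in)

lemma st_comp: assumes "g \<in> PSL2R" "h \<in> PSL2R" shows "st (g \<circ> h) = st g \<circ> st h"
proof
  fix z :: complex
  show "st (g \<circ> h) z = (st g \<circ> st h) z"
  proof (cases "0 < Im z")
    case True
    have "0 < Im (st h z)" using True PSL2R_uhp[OF assms(2), of "- cnj z"] by (simp add: st_def)
    then show ?thesis using True by (simp add: st_def)
  next
    case False then show ?thesis by (simp add: st_def)
  qed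
qed

lemma st_id: "st id = id"
  by (rule ext) (simp add: st_def)

lemma st_inv: assumes "g \<in> PSL2R" shows "st (inv\<^bsub>PSL2R_group\<^esub> g) = inv\<^bsub>PSL2R_group\<^esub> (st g)"
proof -
  have G: "group PSL2R_group" by (rule PSL2R_group_is_group)
  have ig: "inv\<^bsub>PSL2R_group\<^esub> g \<in> PSL2R" using group.inv_closed[OF G, of g] assms by simp
  have "inv\<^bsub>PSL2R_group\<^esub> g \<circ> g = id" using group.l_inv[OF G, of g] assms by simp
  then have "st (inv\<^bsub>PSL2R_group\<^esub> g) \<circ> st g = id" using st_comp[OF ig assms] st_id by simp
  then show ?thesis
    by (intro group.inv_equality[OF G, symmetric]) (auto simp: st_in assms ig)
qed

lemma twist_form:
  assumes c: "\<And>z. 0 < Im z \<Longrightarrow> c z = - cnj (f z)" and f: "f \<in> PSL2R" and g: "g \<in> PSL2R"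
  shows "twist c g = st (f \<circ> g) \<circ> f"
proof
  fix z :: complex
  show "twist c g z = (st (f \<circ> g) \<circ> f) z"
  proof (cases "0 < Im z")
    case True
    have fz: "0 < Im (f z)" using PSL2R_uhp[OF f True] .
    have cz: "0 < Im (c z)" using c[OF True] fz by simp
    have "twist c g z = c (g (c z))" using True by (simp add: twist_def)
    also have "\<dots> = - cnj (f (g (- cnj (f z))))" using c[OF PSL2R_uhp[OF g cz]] c[OF True] by simp
    also have "\<dots> = (st (f \<circ> g) \<circ> f) z" using fz by (simp add: st_def)
    finally show ?thesis .
  next
    case False then show ?thesis using PSL2R_off[OF f False] by (simp add: st_def twist_def)
  qed
qed

lemma cc_form:
  assumes "complex_conjugation c"
  shows "\<exists>f\<in>PSL2R. \<forall>z. 0 < Im z \<longrightarrow> c z = - cnj (f z)"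
proof -
  have cin: "0 < Im (c z)" "c (c z) = z" if "0 < Im z" for z
    using assms that unfolding complex_conjugation_def uhp_def by auto
  have hol: "(\<lambda>z. cnj (c z)) holomorphic_on uhp" using assms unfolding complex_conjugation_def by auto
  define F where "F z = - cnj (c z)" for z
  have holF: "F holomorphic_on uhp" unfolding F_def using hol by (intro holomorphic_intros)
  have Fin: "0 < Im (F z)" if "0 < Im z" for z using cin[OF that] by (simp add: F_def)
  have uo: "open uhp" unfolding uhp_def using open_halfspace_Im_gt[of 0] by simp
  have injF: "inj_on F uhp"
  proof (rule inj_onI)
    fix z w assume zw: "z \<in> uhp" "w \<in> uhp" "F z = F w"
    then have "c z = c w" by (simp add: F_def)
    then show "z = w" using cin(2) zw(1,2) unfolding uhp_def by (metis mem_Collect_eq)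
  qed
  obtain g where holg: "g holomorphic_on (F ` uhp)" and gF: "\<And>z. z \<in> uhp \<Longrightarrow> g (F z) = z"
    using holomorphic_has_inverse[OF holF uo injF] by metis
  have Fsurj: "F ` uhp = uhp"
  proof
    show "F ` uhp \<subseteq> uhp" using Fin by (auto simp: uhp_def)
  next
    show "uhp \<subseteq> F ` uhp"
    proof
      fix w assume w: "w \<in> uhp"
      have m: "0 < Im (- cnj w)" using w by (simp add: uhp_def)
      have "F (c (- cnj w)) = w" using cin(2)[OF m] by (simp add: F_def)
      moreover have "c (- cnj w) \<in> uhp" using cin(1)[OF m] by (simp add: uhp_def)
      ultimately show "w \<in> F ` uhp" by (metis image_eqI)
    qed
  qed
  have holg': "g holomorphic_on uhp" using holg Fsurj by simp
  have gin: "0 < Im (g w)" if "0 < Im w" for w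
  proof -
    have "w \<in> F ` uhp" using that Fsurj by (simp add: uhp_def)
    then obtain z where "z \<in> uhp" "w = F z" by auto
    then show ?thesis using gF by (simp add: uhp_def)
  qed
  obtain a b cc d where det: "a * d - b * cc = 1" and Fm: "\<And>z. 0 < Im z \<Longrightarrow> F z = mf a b cc d z"
    using aut_uhp[OF holF Fin holg' gin] gF unfolding uhp_def by (metis mem_Collect_eq)
  have "c z = - cnj (mob a b cc d z)" if "0 < Im z" for z
  proof -
    have "mob a b cc d z = - cnj (c z)" using Fm[OF that] that by (simp add: mob_mf F_def)
    then show ?thesis by simp
  qed
  then have "\<forall>z. 0 < Im z \<longrightarrow> c z = - cnj (mob a b cc d z)" by blast
  then show ?thesis using mob_in[OF det] by blast
qed


lemma K_exists:
  fixes A B C :: real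
  assumes h: "A * A - B * C = 1"
  shows "\<exists>x y z w e. x * w - y * z = 1 \<and> (e = 1 \<or> e = -1) \<and>
     A = e * (x * w + y * z) \<and> B = e * (-2 * x * y) \<and> C = e * (-2 * z * w)"
proof (cases "B = 0")
  case True
  then have "A * A = 1" using h by simp
  then have A2: "A = 1 \<or> A = -1" using square_eq_1_iff[of A] by (simp add: power2_eq_square)
  show ?thesis
    using A2 True
    by (intro exI[of _ 1] exI[of _ 0] exI[of _ "- A * C / 2"] exI[of _ 1] exI[of _ A]) auto
next
  case False
  define e :: real where "e = (if 0 \<le> A then 1 else -1)"
  have e2: "e * e = 1" by (simp add: e_def)
  have eA: "0 \<le> e * A" by (simp add: e_def)
  define m where "m = (e * A + 1) / 2"
  define y where "y = - e * B / 2"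
  have y0: "y \<noteq> 0" using False by (simp add: y_def e_def)
  define z where "z = (e * A - 1) / (2 * y)"
  have d1: "1 * m - y * z = 1" using y0 by (simp add: m_def z_def field_simps)
  have d2: "A = e * (1 * m + y * z)" using y0 e2 by (simp add: m_def z_def field_simps)
  have "e * (-2 * 1 * y) = (e * e) * B" by (simp add: y_def)
  then have d3: "B = e * (-2 * 1 * y)" using e2 by simp
  have d4: "C = e * (-2 * z * m)"
  proof -
    have "e * (-2 * z * m) = - e * ((e * A) * (e * A) - 1) / (2 * y)"
      using y0 by (simp add: m_def z_def field_simps)
    also have "(e * A) * (e * A) = A * A"
    proof -
      have "(e * A) * (e * A) = (e * e) * (A * A)" by (simp only: mult_ac)
      then show ?thesis using e2 by simp
    qed
    also have "A * A - 1 = B * C" using h by simp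
    also have "- e * (B * C) / (2 * y) = C" using y0 False e2 by (simp add: y_def field_simps)
    finally show ?thesis by simp
  qed
  have ee: "e = 1 \<or> e = -1" by (simp add: e_def)
  show ?thesis
    apply (rule exI[of _ 1], rule exI[of _ y], rule exI[of _ z], rule exI[of _ m], rule exI[of _ e])
    using ee d1 d2 d3 d4 by (intro conjI)
qed

definition Dm :: "bool \<Rightarrow> real \<Rightarrow> complex \<Rightarrow> complex" where
  "Dm b t = (if b then mob 0 t (-1/t) 0 else mob t 0 0 (1/t))"

lemma Dm_in: "0 < t \<Longrightarrow> Dm b t \<in> PSL2R"
  by (auto simp: Dm_def intro!: mob_in)

lemma st_Dm: "st (Dm b t) = Dm b t"
proof (cases b)
  case True
  have "mob 0 (-t) (1/t) 0 = mob 0 t (-1/t) 0" using mob_neg[of 0 t "-1/t" 0] by simp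
  then show ?thesis using True by (simp add: Dm_def st_mob)
qed (simp add: Dm_def st_mob)

lemma st_fix:
  assumes det: "a * d - b * c = 1" and fx: "st (mob a b c d) = mob a b c d"
  shows "\<exists>bb t. 0 < t \<and> mob a b c d = Dm bb t"
proof -
  have det': "a * d - (-b) * (-c) = 1" using det by simp
  have "mob a (-b) (-c) d = mob a b c d" using fx by (simp add: st_mob)
  then have "(a = a \<and> -b = b \<and> -c = c \<and> d = d) \<or> (a = -a \<and> -b = -b \<and> -c = -c \<and> d = -d)"
    using mob_eq[OF det' det] by blast
  then consider "b = 0" "c = 0" | "a = 0" "d = 0" by linarith
  then show ?thesis
  proof cases
    case 1
    then have ad: "a * d = 1" using det by simp
    then have a0: "a \<noteq> 0" by auto
    have d: "d = 1 / a" using ad a0 by (simp add: field_simps)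
    show ?thesis
    proof (cases "0 < a")
      case True then show ?thesis using 1 d by (intro exI[of _ False] exI[of _ a]) (simp add: Dm_def)
    next
      case False
      then have "0 < -a" using a0 by simp
      moreover have "mob a b c d = mob (-a) 0 0 (1 / (-a))"
        using mob_neg[of "-a" 0 0 "1/(-a)"] 1 d by simp
      ultimately show ?thesis by (intro exI[of _ False] exI[of _ "-a"]) (simp add: Dm_def)
    qed
  next
    case 2
    then have bc: "b * c = -1" using det by simp
    then have b0: "b \<noteq> 0" by auto
    have c: "c = -1 / b" using bc b0 by (simp add: field_simps)
    show ?thesis
    proof (cases "0 < b")
      case True then show ?thesis using 2 c by (intro exI[of _ True] exI[of _ b]) (simp add: Dm_def)
    next
      case False
      then have "0 < -b" using b0 by simp
      moreover have "mob a b c d = mob 0 (-b) (-1 / (-b)) 0"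
        using mob_neg[of 0 "-b" "-1/(-b)" 0] 2 c by simp
      ultimately show ?thesis by (intro exI[of _ True] exI[of _ "-b"]) (simp add: Dm_def)
    qed
  qed
qed

lemma Dm_inj:
  assumes "0 < t" "0 < t'" "Dm b t = Dm b' t'"
  shows "b = b' \<and> t = t'"
proof -
  show ?thesis
  proof (cases b; cases b')
    assume "b" "b'"
    then have e: "mob 0 t (-1/t) 0 = mob 0 t' (-1/t') 0" using assms by (simp add: Dm_def)
    show ?thesis using mob_eq[OF _ _ e] assms \<open>b\<close> \<open>b'\<close> by (auto simp: field_simps)
  next
    assume "b" "\<not> b'"
    then have e: "mob 0 t (-1/t) 0 = mob t' 0 0 (1/t')" using assms by (simp add: Dm_def)
    show ?thesis using mob_eq[OF _ _ e] assms by auto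
  next
    assume "\<not> b" "b'"
    then have e: "mob t 0 0 (1/t) = mob 0 t' (-1/t') 0" using assms by (simp add: Dm_def)
    show ?thesis using mob_eq[OF _ _ e] assms by auto
  next
    assume "\<not> b" "\<not> b'"
    then have e: "mob t 0 0 (1/t) = mob t' 0 0 (1/t')" using assms by (simp add: Dm_def)
    show ?thesis using mob_eq[OF _ _ e] assms \<open>\<not> b\<close> \<open>\<not> b'\<close> by auto
  qed
qed

lemma Dm_comp:
  assumes "0 < t" "0 < t'"
  shows "Dm b t \<circ> Dm b' t' = Dm (b \<noteq> b') (if b then t / t' else t * t')"
proof (cases b; cases b')
  assume "b" "b'"
  have "Dm b t \<circ> Dm b' t' = mob (- (t / t')) 0 0 (- (t' / t))"
    using mob_comp[where a=0 and b=t and c="-1/t" and d=0 and a'=0 and b'=t' and c'="-1/t'" and d'=0] assms \<open>b\<close> \<open>b'\<close> by (simp add: Dm_def)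
  also have "\<dots> = mob (t / t') 0 0 (t' / t)" using mob_neg[of "t/t'" 0 0 "t'/t"] by simp
  finally show ?thesis using \<open>b\<close> \<open>b'\<close> by (simp add: Dm_def)
next
  assume "b" "\<not> b'"
  show ?thesis
    using mob_comp[where a=0 and b=t and c="-1/t" and d=0 and a'=t' and b'=0 and c'=0 and d'="1/t'"] assms \<open>b\<close> \<open>\<not> b'\<close> by (simp add: Dm_def)
next
  assume "\<not> b" "b'"
  show ?thesis
    using mob_comp[where a=t and b=0 and c=0 and d="1/t" and a'=0 and b'=t' and c'="-1/t'" and d'=0] assms \<open>\<not> b\<close> \<open>b'\<close> by (simp add: Dm_def)
next
  assume "\<not> b" "\<not> b'"
  show ?thesis
    using mob_comp[where a=t and b=0 and c=0 and d="1/t" and a'=t' and b'=0 and c'=0 and d'="1/t'"] assms \<open>\<not> b\<close> \<open>\<not> b'\<close> by (simp add: Dm_def)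
qed

lemma Dm_one: "Dm False 1 = id"
  by (simp add: Dm_def mob_id)


lemma discrete_subgroup_real:
  fixes L :: "real set"
  assumes z: "0 \<in> L" and add: "\<And>x y. x \<in> L \<Longrightarrow> y \<in> L \<Longrightarrow> x + y \<in> L"
    and neg: "\<And>x. x \<in> L \<Longrightarrow> -x \<in> L"
    and d: "0 < \<delta>" and disc: "\<And>x. x \<in> L \<Longrightarrow> \<bar>x\<bar> < \<delta> \<Longrightarrow> x = 0"
  shows "L = {0} \<or> (\<exists>a>0. L = range (\<lambda>n::int. of_int n * a))"
proof (cases "L = {0}")
  case True then show ?thesis by blast
next
  case False
  then obtain x where x: "x \<in> L" "x \<noteq> 0" using z by blast
  define P where "P = {y \<in> L. 0 < y}"
  have Pne: "P \<noteq> {}"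
  proof (cases "x > 0")
    case True then show ?thesis using x by (auto simp: P_def)
  next
    case False then have "-x > 0" using x by simp
    then show ?thesis using neg[OF x(1)] by (auto simp: P_def)
  qed
  have Pge: "\<delta> \<le> y" if "y \<in> P" for y
    using disc[of y] that by (force simp: P_def)
  have bdd: "bdd_below P" using Pge by (auto simp: bdd_below_def)
  define a where "a = Inf P"
  have age: "\<delta> \<le> a" unfolding a_def using Pge Pne by (intro cInf_greatest) auto
  have ale: "a \<le> y" if "y \<in> P" for y unfolding a_def using bdd that by (rule cInf_lower[rotated])
  have aP: "a \<in> P"
  proof (rule ccontr)
    assume na: "a \<notin> P"
    have "Inf P < a + \<delta>" using d by (simp add: a_def)
    then obtain p1 where p1: "p1 \<in> P" "p1 < a + \<delta>" using cInf_lessD[OF Pne] by blast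
    have "a < p1" using ale[OF p1(1)] na p1(1) by (metis order_le_less)
    then have "Inf P < p1" by (simp add: a_def)
    then obtain p2 where p2: "p2 \<in> P" "p2 < p1" using cInf_lessD[OF Pne] by blast
    have "a \<le> p2" using ale[OF p2(1)] .
    have "p1 + - p2 \<in> L" using add[OF _ neg] p1(1) p2(1) by (auto simp: P_def)
    moreover have "\<bar>p1 + - p2\<bar> < \<delta>" using p1 p2 \<open>a \<le> p2\<close> by simp
    ultimately have "p1 + - p2 = 0" by (rule disc)
    then show False using p2 by simp
  qed
  have a0: "0 < a" using age d by simp
  have aL: "a \<in> L" using aP by (simp add: P_def)
  have natm: "of_nat n * a \<in> L" for n :: nat
    by (induction n) (auto simp: z algebra_simps intro: add[OF aL])
  have intm: "of_int n * a \<in> L" for n :: int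
  proof (cases "n \<ge> 0")
    case True then show ?thesis using natm[of "nat n"] by simp
  next
    case False
    then have "of_int n * a = - (of_nat (nat (-n)) * a)" by simp
    then show ?thesis using neg[OF natm[of "nat (-n)"]] by simp
  qed
  have "L = range (\<lambda>n::int. of_int n * a)"
  proof
    show "range (\<lambda>n::int. of_int n * a) \<subseteq> L" using intm by auto
  next
    show "L \<subseteq> range (\<lambda>n::int. of_int n * a)"
    proof
      fix y assume y: "y \<in> L"
      define n where "n = floor (y / a)"
      have r1: "of_int n * a \<le> y" using a0 unfolding n_def
        by (metis floor_divide_lower)
      have "y / a < of_int n + 1" unfolding n_def by linarith
      then have r2: "y < of_int n * a + a" using a0 by (simp add: divide_less_eq algebra_simps)
      have rL: "y + - (of_int n * a) \<in> L" using add[OF y neg[OF intm]] .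
      have "y + - (of_int n * a) = 0"
      proof (rule ccontr)
        assume "y + - (of_int n * a) \<noteq> 0"
        then have "y + - (of_int n * a) \<in> P" using r1 rL by (auto simp: P_def)
        then have "a \<le> y + - (of_int n * a)" by (rule ale)
        then show False using r2 by simp
      qed
      then show "y \<in> range (\<lambda>n::int. of_int n * a)" by (auto intro!: image_eqI[of _ _ n])
    qed
  qed
  then show ?thesis using a0 by blast
qed


lemma group_inf_dihedral: "group inf_dihedral_group"
proof (rule groupI)
  fix x y z :: "int \<times> bool"
  show "x \<otimes>\<^bsub>inf_dihedral_group\<^esub> y \<otimes>\<^bsub>inf_dihedral_group\<^esub> z =
        x \<otimes>\<^bsub>inf_dihedral_group\<^esub> (y \<otimes>\<^bsub>inf_dihedral_group\<^esub> z)"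
    by (cases x; cases y; cases z) (auto simp: inf_dihedral_group_def)
next
  fix x :: "int \<times> bool"
  show "\<exists>y\<in>carrier inf_dihedral_group. y \<otimes>\<^bsub>inf_dihedral_group\<^esub> x = \<one>\<^bsub>inf_dihedral_group\<^esub>"
  proof (cases x)
    case (Pair n s)
    show ?thesis
      by (rule bexI[where x="if s then (n, True) else (-n, False)"]) (auto simp: Pair inf_dihedral_group_def)
  qed
qed (auto simp: inf_dihedral_group_def)


lemma final_struct:
  fixes Rep :: "bool \<Rightarrow> real \<Rightarrow> complex \<Rightarrow> complex" and \<Gamma> Z
  assumes sg: "subgroup \<Gamma> PSL2R_group"
  and Rin: "\<And>b t. 0 < t \<Longrightarrow> Rep b t \<in> PSL2R"
  and Rinj: "\<And>b t b' t'. 0 < t \<Longrightarrow> 0 < t' \<Longrightarrow> Rep b t = Rep b' t' \<Longrightarrow> b = b' \<and> t = t'"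
  and Rcomp: "\<And>b t b' t'. 0 < t \<Longrightarrow> 0 < t' \<Longrightarrow>
        Rep b t \<circ> Rep b' t' = Rep (b \<noteq> b') (if b then t / t' else t * t')"
  and R1: "Rep False 1 = id"
  and d0: "0 < \<delta>" and disc: "\<And>t. 0 < t \<Longrightarrow> \<bar>t - 1\<bar> < \<delta> \<Longrightarrow> Rep False t \<in> \<Gamma> \<Longrightarrow> t = 1"
  and Zdef: "Z = {\<sigma> \<in> \<Gamma>. \<exists>b t. 0 < t \<and> \<sigma> = Rep b t}"
  shows "Z = {id} \<or>
         PSL2R_group\<lparr>carrier := Z\<rparr> \<cong> integer_mod_group 2 \<or>
         PSL2R_group\<lparr>carrier := Z\<rparr> \<cong> integer_group \<or>
         PSL2R_group\<lparr>carrier := Z\<rparr> \<cong> inf_dihedral_group"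
proof -
  have grp: "group PSL2R_group" by (rule PSL2R_group_is_group)
  have idG: "id \<in> \<Gamma>" using subgroup.one_closed[OF sg] by simp
  have mG: "x \<circ> y \<in> \<Gamma>" if "x \<in> \<Gamma>" "y \<in> \<Gamma>" for x y
    using subgroup.m_closed[OF sg that] by simp
  have invR: "inv\<^bsub>PSL2R_group\<^esub> (Rep b t) = Rep b (if b then t else 1 / t)" if "0 < t" for b t
  proof (rule group.inv_equality[OF grp])
    show "Rep b (if b then t else 1 / t) \<otimes>\<^bsub>PSL2R_group\<^esub> Rep b t = \<one>\<^bsub>PSL2R_group\<^esub>"
      using Rcomp[of "if b then t else 1 / t" t b b] that R1 by auto
    show "Rep b t \<in> carrier PSL2R_group" using Rin that by (simp add: PSL2R_group_def)
    show "Rep b (if b then t else 1 / t) \<in> carrier PSL2R_group" using Rin that by (simp add: PSL2R_group_def)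
  qed
  have invG: "Rep b (if b then t else 1 / t) \<in> \<Gamma>" if "0 < t" "Rep b t \<in> \<Gamma>" for b t
    using subgroup.m_inv_closed[OF sg that(2)] invR[OF that(1)] by simp
  define L where "L = {ln t | t. 0 < t \<and> Rep False t \<in> \<Gamma>}"
  have Lmem: "ln t \<in> L \<longleftrightarrow> Rep False t \<in> \<Gamma>" if "0 < t" for t
  proof
    assume "ln t \<in> L"
    then obtain t' where "ln t = ln t'" "0 < t'" "Rep False t' \<in> \<Gamma>" by (auto simp: L_def)
    then show "Rep False t \<in> \<Gamma>" using that by simp
  qed (use that in \<open>auto simp: L_def\<close>)
  have L0: "0 \<in> L" using idG R1 Lmem[of 1] by simp
  have Ladd: "x + y \<in> L" if xyL: "x \<in> L" "y \<in> L" for x y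
  proof -
    obtain t s where ts: "x = ln t" "0 < t" "Rep False t \<in> \<Gamma>" "y = ln s" "0 < s" "Rep False s \<in> \<Gamma>"
      using xyL unfolding L_def by blast
    have "Rep False (t * s) \<in> \<Gamma>" using mG[OF ts(3) ts(6)] Rcomp[of t s False False] ts by simp
    then show ?thesis using ts Lmem[of "t * s"] by (simp add: ln_mult)
  qed
  have Lneg: "- x \<in> L" if xL: "x \<in> L" for x
  proof -
    obtain t where ts: "x = ln t" "0 < t" "Rep False t \<in> \<Gamma>" using xL unfolding L_def by blast
    have "Rep False (1 / t) \<in> \<Gamma>" using invG[OF ts(2,3)] by simp
    then show ?thesis using ts Lmem[of "1 / t"] by (simp add: ln_div)
  qed
  define \<delta>' where "\<delta>' = ln (1 + \<delta>)"
  have d'0: "0 < \<delta>'" using d0 by (simp add: \<delta>'_def)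
  have Ldisc: "x = 0" if xL: "x \<in> L" "\<bar>x\<bar> < \<delta>'" for x
  proof -
    obtain t where ts: "x = ln t" "0 < t" "Rep False t \<in> \<Gamma>" using xL(1) unfolding L_def by blast
    have "ln t < ln (1 + \<delta>)" using xL ts by (simp add: \<delta>'_def)
    then have t1: "t < 1 + \<delta>" using ts d0 by simp
    have "- ln (1 + \<delta>) < ln t" using xL ts by (simp add: \<delta>'_def)
    then have "ln (1 / (1 + \<delta>)) < ln t" using d0 by (simp add: ln_div)
    then have "1 / (1 + \<delta>) < t" using ts d0 by simp
    moreover have "1 - \<delta> \<le> 1 / (1 + \<delta>)" using d0 by (simp add: field_simps)
    ultimately have "\<bar>t - 1\<bar> < \<delta>" using t1 by simp
    then have "t = 1" using disc ts by blast
    then show ?thesis using ts by simp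
  qed
  have Lcases: "L = {0} \<or> (\<exists>a>0. L = range (\<lambda>n::int. of_int n * a))"
    by (rule discrete_subgroup_real[OF L0 Ladd Lneg d'0 Ldisc])
  have Zsub: "Z \<subseteq> \<Gamma>" using Zdef by auto
  have carrZ: "carrier (PSL2R_group\<lparr>carrier := Z\<rparr>) = Z" by simp
  have multZ: "x \<otimes>\<^bsub>PSL2R_group\<lparr>carrier := Z\<rparr>\<^esub> y = x \<circ> y" for x y by (simp add: PSL2R_group_def)
  show ?thesis
  proof (cases "\<exists>u0. 0 < u0 \<and> Rep True u0 \<in> \<Gamma>")
    case False
    hence noflip: "\<And>u. 0 < u \<Longrightarrow> Rep True u \<notin> \<Gamma>" by blast
    have Zeq: "Z = {\<sigma>. \<exists>t. 0 < t \<and> ln t \<in> L \<and> \<sigma> = Rep False t}"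
    proof (rule Set.set_eqI)
      fix \<sigma>
      show "\<sigma> \<in> Z \<longleftrightarrow> \<sigma> \<in> {\<sigma>. \<exists>t. 0 < t \<and> ln t \<in> L \<and> \<sigma> = Rep False t}"
      proof
        assume "\<sigma> \<in> Z"
        then obtain b t where bt: "\<sigma> \<in> \<Gamma>" "0 < t" "\<sigma> = Rep b t" unfolding Zdef by blast
        then have b: "b = False" using noflip by (cases b) auto
        then have "ln t \<in> L" using bt Lmem by auto
        then show "\<sigma> \<in> {\<sigma>. \<exists>t. 0 < t \<and> ln t \<in> L \<and> \<sigma> = Rep False t}"
          using bt b by blast
      next
        assume "\<sigma> \<in> {\<sigma>. \<exists>t. 0 < t \<and> ln t \<in> L \<and> \<sigma> = Rep False t}"
        then obtain t where bt: "0 < t" "ln t \<in> L" "\<sigma> = Rep False t" by blast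
        then have "\<sigma> \<in> \<Gamma>" using Lmem by auto
        then show "\<sigma> \<in> Z" unfolding Zdef using bt by blast
      qed
    qed
    from Lcases show ?thesis
    proof
      assume "L = {0}"
      then have "Z = {id}" using Zeq R1 by (auto intro!: exI[where x="1::real"])
      then show ?thesis by blast
    next
      assume "\<exists>a>0. L = range (\<lambda>n::int. of_int n * a)"
      then obtain a where a0: "0 < a" and La: "L = range (\<lambda>n::int. of_int n * a)" by blast
      define E where "E n = Rep False (exp (of_int n * a))" for n :: int
      have Einj: "inj E"
      proof (rule injI)
        fix m n assume "E m = E n"
        then have "exp (of_int m * a) = exp (of_int n * a)"
          using Rinj[of "exp (of_int m * a)" "exp (of_int n * a)" False False] unfolding E_def by simp
        then show "m = n" using a0 by simp
      qed
      have Eim: "E ` UNIV = Z"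
      proof
        show "E ` UNIV \<subseteq> Z"
        proof
          fix \<sigma> assume "\<sigma> \<in> E ` UNIV"
          then obtain n where "\<sigma> = E n" by auto
          then show "\<sigma> \<in> Z" using La unfolding Zeq E_def
            by (intro CollectI exI[of _ "exp (of_int n * a)"]) auto
        qed
      next
        show "Z \<subseteq> E ` UNIV"
        proof
          fix \<sigma> assume "\<sigma> \<in> Z"
          then obtain t where t: "0 < t" "ln t \<in> L" "\<sigma> = Rep False t" by (auto simp: Zeq)
          then obtain n where "ln t = of_int n * a" using La by auto
          then have "t = exp (of_int n * a)" using t by (metis exp_ln)
          then show "\<sigma> \<in> E ` UNIV" using t by (auto simp: E_def)
        qed
      qed
      have Ehom: "E (m + n) = E m \<circ> E n" for m n
        using Rcomp[of "exp (of_int m * a)" "exp (of_int n * a)" False False]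
        by (simp add: E_def distrib_right exp_add)
      have "E \<in> iso integer_group (PSL2R_group\<lparr>carrier := Z\<rparr>)"
      proof (rule isoI)
        show "E \<in> hom integer_group (PSL2R_group\<lparr>carrier := Z\<rparr>)"
        proof (rule homI)
          fix x show "E x \<in> carrier (PSL2R_group\<lparr>carrier := Z\<rparr>)" using Eim by auto
        next
          fix x y
          show "E (x \<otimes>\<^bsub>integer_group\<^esub> y) = E x \<otimes>\<^bsub>PSL2R_group\<lparr>carrier := Z\<rparr>\<^esub> E y"
            using Ehom[of x y] by (simp add: integer_group_def PSL2R_group_def)
        qed
        show "bij_betw E (carrier integer_group) (carrier (PSL2R_group\<lparr>carrier := Z\<rparr>))"
          using Einj Eim by (simp add: bij_betw_def integer_group_def)
      qed
      then have "integer_group \<cong> PSL2R_group\<lparr>carrier := Z\<rparr>" by (rule is_isoI)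
      then have "PSL2R_group\<lparr>carrier := Z\<rparr> \<cong> integer_group"
        by (rule group.iso_sym[OF group_integer_group])
      then show ?thesis by blast
    qed
  next
    case True
    then obtain u0 where u0: "0 < u0" "Rep True u0 \<in> \<Gamma>" by blast
    have flipmem: "Rep True u \<in> \<Gamma> \<longleftrightarrow> ln (u / u0) \<in> L" if "0 < u" for u
    proof
      assume "Rep True u \<in> \<Gamma>"
      then have "Rep True u \<circ> Rep True u0 \<in> \<Gamma>" using mG u0 by blast
      then have "Rep False (u / u0) \<in> \<Gamma>" using Rcomp[of u u0 True True] that u0 by simp
      then show "ln (u / u0) \<in> L" using Lmem[of "u / u0"] that u0 by simp
    next
      assume "ln (u / u0) \<in> L"
      then have "Rep False (u / u0) \<in> \<Gamma>" using Lmem[of "u / u0"] that u0 by simp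
      then have "Rep False (u / u0) \<circ> Rep True u0 \<in> \<Gamma>" using mG u0 by blast
      then show "Rep True u \<in> \<Gamma>" using Rcomp[of "u / u0" u0 False True] that u0 by simp
    qed
    have Zeq: "Z = {\<sigma>. \<exists>b t. 0 < t \<and> ln (t / (if b then u0 else 1)) \<in> L \<and> \<sigma> = Rep b t}"
    proof (rule Set.set_eqI)
      fix \<sigma>
      show "\<sigma> \<in> Z \<longleftrightarrow> \<sigma> \<in> {\<sigma>. \<exists>b t. 0 < t \<and> ln (t / (if b then u0 else 1)) \<in> L \<and> \<sigma> = Rep b t}"
      proof
        assume "\<sigma> \<in> Z"
        then obtain b t where bt: "\<sigma> \<in> \<Gamma>" "0 < t" "\<sigma> = Rep b t" unfolding Zdef by blast
        then have "ln (t / (if b then u0 else 1)) \<in> L" using flipmem Lmem by (cases b) auto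
        then show "\<sigma> \<in> {\<sigma>. \<exists>b t. 0 < t \<and> ln (t / (if b then u0 else 1)) \<in> L \<and> \<sigma> = Rep b t}"
          using bt by blast
      next
        assume "\<sigma> \<in> {\<sigma>. \<exists>b t. 0 < t \<and> ln (t / (if b then u0 else 1)) \<in> L \<and> \<sigma> = Rep b t}"
        then obtain b t where bt: "0 < t" "ln (t / (if b then u0 else 1)) \<in> L" "\<sigma> = Rep b t" by blast
        then have "\<sigma> \<in> \<Gamma>" using flipmem Lmem by (cases b) auto
        then show "\<sigma> \<in> Z" unfolding Zdef using bt by blast
      qed
    qed
    from Lcases show ?thesis
    proof
      assume L0: "L = {0}"
      define f where "f = Rep True u0"
      have Zf: "Z = {id, f}"
      proof
        show "Z \<subseteq> {id, f}"
        proof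
          fix \<sigma> assume "\<sigma> \<in> Z"
          then obtain b t where bt: "0 < t" "ln (t / (if b then u0 else 1)) \<in> L" "\<sigma> = Rep b t"
            by (auto simp: Zeq)
          then have "ln (t / (if b then u0 else 1)) = 0" using L0 by simp
          then have "t / (if b then u0 else 1) = 1" using bt u0 by (simp add: ln_eq_zero_iff)
          then have "t = (if b then u0 else 1)" using u0 by (simp split: if_splits)
          then show "\<sigma> \<in> {id, f}" using bt R1 by (cases b) (auto simp: f_def)
        qed
      next
        have i1: "id \<in> Z" unfolding Zeq
          by (rule CollectI, rule exI[of _ False], rule exI[of _ 1]) (use R1 L0 in simp)
        have i2: "f \<in> Z" unfolding Zeq f_def
          by (rule CollectI, rule exI[of _ True], rule exI[of _ u0]) (use u0 L0 in simp)
        show "{id, f} \<subseteq> Z" using i1 i2 by simp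
      qed
      have fid: "f \<noteq> id" using Rinj[of u0 1 True False] u0 R1 by (auto simp: f_def)
      have ff: "f \<circ> f = id" using Rcomp[of u0 u0 True True] u0 R1 by (simp add: f_def)
      define \<phi> where "\<phi> \<sigma> = (if \<sigma> = id then 0 else (1::int))" for \<sigma> :: "complex \<Rightarrow> complex"
      have "\<phi> \<in> iso (PSL2R_group\<lparr>carrier := Z\<rparr>) (integer_mod_group 2)"
      proof (rule isoI)
        show "\<phi> \<in> hom (PSL2R_group\<lparr>carrier := Z\<rparr>) (integer_mod_group 2)"
        proof (rule homI)
          fix x assume "x \<in> carrier (PSL2R_group\<lparr>carrier := Z\<rparr>)"
          show "\<phi> x \<in> carrier (integer_mod_group 2)" by (simp add: \<phi>_def carrier_integer_mod_group)
        next
          fix x y assume xy: "x \<in> carrier (PSL2R_group\<lparr>carrier := Z\<rparr>)" "y \<in> carrier (PSL2R_group\<lparr>carrier := Z\<rparr>)"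
          then have "x = id \<or> x = f" "y = id \<or> y = f" using Zf by auto
          then show "\<phi> (x \<otimes>\<^bsub>PSL2R_group\<lparr>carrier := Z\<rparr>\<^esub> y) = \<phi> x \<otimes>\<^bsub>integer_mod_group 2\<^esub> \<phi> y"
            using fid ff by (elim disjE) (simp_all add: \<phi>_def PSL2R_group_def)
        qed
        show "bij_betw \<phi> (carrier (PSL2R_group\<lparr>carrier := Z\<rparr>)) (carrier (integer_mod_group 2))"
          using fid unfolding bij_betw_def inj_on_def
          by (auto simp: Zf \<phi>_def carrier_integer_mod_group image_iff)
      qed
      then show ?thesis by (blast intro: is_isoI)
    next
      assume "\<exists>a>0. L = range (\<lambda>n::int. of_int n * a)"
      then obtain a where a0: "0 < a" and La: "L = range (\<lambda>n::int. of_int n * a)" by blast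
      define E where "E p = Rep (snd p) ((if snd p then u0 else 1) * exp (of_int (fst p) * a))"
        for p :: "int \<times> bool"
      have pos: "0 < (if b then u0 else 1) * exp (x::real)" for b x using u0 by simp
      have Einj: "inj E"
      proof (rule injI)
        fix p q assume "E p = E q"
        then have "snd p = snd q \<and> (if snd p then u0 else 1) * exp (of_int (fst p) * a) =
               (if snd q then u0 else 1) * exp (of_int (fst q) * a)"
          unfolding E_def by (rule Rinj[OF pos pos])
        then have "snd p = snd q" "exp (of_int (fst p) * a) = exp (of_int (fst q) * a)"
          using u0 by (auto split: if_splits)
        then show "p = q" using a0 by (simp add: prod_eq_iff)
      qed
      have Eim: "E ` UNIV = Z"
      proof
        show "E ` UNIV \<subseteq> Z"
        proof
          fix \<sigma> assume "\<sigma> \<in> E ` UNIV"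
          then obtain n b where s: "\<sigma> = E (n, b)" by auto
          have "ln ((if b then u0 else 1) * exp (of_int n * a) / (if b then u0 else 1)) = of_int n * a"
            using u0 by simp
          then show "\<sigma> \<in> Z" using La s pos[of b "of_int n * a"] unfolding Zeq E_def
            by (intro CollectI exI[of _ b] exI[of _ "(if b then u0 else 1) * exp (of_int n * a)"]) auto
        qed
      next
        show "Z \<subseteq> E ` UNIV"
        proof
          fix \<sigma> assume "\<sigma> \<in> Z"
          then obtain b t where t: "0 < t" "ln (t / (if b then u0 else 1)) \<in> L" "\<sigma> = Rep b t"
            by (auto simp: Zeq)
          then obtain n where "ln (t / (if b then u0 else 1)) = of_int n * a" using La by auto
          then have "t / (if b then u0 else 1) = exp (of_int n * a)" using t u0
            by (metis exp_ln divide_pos_pos zero_less_one)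
          then have "t = (if b then u0 else 1) * exp (of_int n * a)" using u0
            by (auto simp: field_simps split: if_splits)
          then show "\<sigma> \<in> E ` UNIV" using t by (auto simp: E_def intro!: image_eqI[of _ _ "(n, b)"])
        qed
      qed
      have Ehom0: "E (m, b) \<circ> E (n, c) = E (if b then m - n else m + n, b \<noteq> c)" for m n b c
      proof -
        define p where "p = exp (of_int m * a)"
        define q where "q = exp (of_int n * a)"
        have p0: "0 < p" "0 < q" by (simp_all add: p_def q_def)
        have ed: "exp ((of_int m - of_int n) * a) = p / q"
          by (simp add: p_def q_def left_diff_distrib exp_diff)
        have ea: "exp ((of_int m + of_int n) * a) = p * q"
          by (simp add: p_def q_def distrib_right exp_add)
        have "E (m, b) \<circ> E (n, c) = Rep b ((if b then u0 else 1) * p) \<circ> Rep c ((if c then u0 else 1) * q)"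
          by (simp add: E_def p_def q_def)
        also have "\<dots> = Rep (b \<noteq> c) (if b then (if b then u0 else 1) * p / ((if c then u0 else 1) * q)
             else (if b then u0 else 1) * p * ((if c then u0 else 1) * q))"
          by (rule Rcomp) (use u0 p0 in auto)
        also have "\<dots> = E (if b then m - n else m + n, b \<noteq> c)"
        proof (cases b; cases c)
          assume "b" "c" then show ?thesis using u0 p0 by (simp add: E_def ed)
        next
          assume "b" "\<not> c" then show ?thesis using u0 p0 by (simp add: E_def ed)
        next
          assume "\<not> b" "c"
          have r: "E (if b then m - n else m + n, b \<noteq> c) = Rep True (u0 * (p * q))"
            using \<open>\<not> b\<close> \<open>c\<close> by (simp add: E_def ea)
          have l: "(if b then (if b then u0 else 1) * p / ((if c then u0 else 1) * q)
             else (if b then u0 else 1) * p * ((if c then u0 else 1) * q)) = u0 * (p * q)"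
            using \<open>\<not> b\<close> \<open>c\<close> by (simp add: mult.left_commute)
          show ?thesis unfolding l r using \<open>\<not> b\<close> \<open>c\<close> by simp
        next
          assume "\<not> b" "\<not> c" then show ?thesis using u0 p0 by (simp add: E_def ea)
        qed
        finally show ?thesis .
      qed
      have "E \<in> iso inf_dihedral_group (PSL2R_group\<lparr>carrier := Z\<rparr>)"
      proof (rule isoI)
        show "E \<in> hom inf_dihedral_group (PSL2R_group\<lparr>carrier := Z\<rparr>)"
        proof (rule homI)
          fix x show "E x \<in> carrier (PSL2R_group\<lparr>carrier := Z\<rparr>)" using Eim by auto
        next
          fix x y :: "int \<times> bool"
          obtain m b where x: "x = (m, b)" by (cases x)
          obtain n c where y: "y = (n, c)" by (cases y)
          have "x \<otimes>\<^bsub>inf_dihedral_group\<^esub> y = (if b then m - n else m + n, b \<noteq> c)"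
            by (simp add: x y inf_dihedral_group_def)
          then show "E (x \<otimes>\<^bsub>inf_dihedral_group\<^esub> y) = E x \<otimes>\<^bsub>PSL2R_group\<lparr>carrier := Z\<rparr>\<^esub> E y"
            using Ehom0[of m b n c] by (simp add: x y PSL2R_group_def)
        qed
        show "bij_betw E (carrier inf_dihedral_group) (carrier (PSL2R_group\<lparr>carrier := Z\<rparr>))"
          using Einj Eim by (simp add: bij_betw_def inf_dihedral_group_def)
      qed
      then have "inf_dihedral_group \<cong> PSL2R_group\<lparr>carrier := Z\<rparr>" by (rule is_isoI)
      then have "PSL2R_group\<lparr>carrier := Z\<rparr> \<cong> inf_dihedral_group"
        by (rule group.iso_sym[OF group_inf_dihedral])
      then show ?thesis by blast
    qed
  qed
qed


lemma grpG: "group PSL2R_group" by (rule PSL2R_group_is_group)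

lemma P_comp: "g \<in> PSL2R \<Longrightarrow> h \<in> PSL2R \<Longrightarrow> g \<circ> h \<in> PSL2R"
  using monoid.m_closed[OF group.is_monoid[OF grpG], of g h] by simp
lemma P_inv: "g \<in> PSL2R \<Longrightarrow> inv\<^bsub>PSL2R_group\<^esub> g \<in> PSL2R"
  using group.inv_closed[OF grpG, of g] by simp
lemma P_linv: "g \<in> PSL2R \<Longrightarrow> inv\<^bsub>PSL2R_group\<^esub> g \<circ> g = id"
  using group.l_inv[OF grpG, of g] by simp
lemma P_rinv: "g \<in> PSL2R \<Longrightarrow> g \<circ> inv\<^bsub>PSL2R_group\<^esub> g = id"
  using group.r_inv[OF grpG, of g] by simp
lemma P_id: "id \<in> PSL2R" using mob_in[of 1 1 0 0] mob_id by simp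
lemma P_inv_unique: "g \<in> PSL2R \<Longrightarrow> h \<in> PSL2R \<Longrightarrow> h \<circ> g = id \<Longrightarrow> inv\<^bsub>PSL2R_group\<^esub> g = h"
  using group.inv_equality[OF grpG, of h g] by simp

lemma LIM_delta:
  fixes f :: "real \<Rightarrow> real"
  assumes "isCont f 1" "0 < e"
  shows "\<exists>d>0. \<forall>t. \<bar>t - 1\<bar> < d \<longrightarrow> \<bar>f t - f 1\<bar> < e"
proof -
  obtain d where d: "0 < d" "\<And>t. t \<noteq> 1 \<Longrightarrow> norm (t - 1) < d \<Longrightarrow> norm (f t - f 1) < e"
    using LIM_D[OF assms(1)[unfolded isCont_def] assms(2)] by blast
  have "\<bar>f t - f 1\<bar> < e" if "\<bar>t - 1\<bar> < d" for t
    using d(2)[of t] that assms(2) by (cases "t = 1") auto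
  then show ?thesis using d(1) by blast
qed


definition Rp :: "real \<Rightarrow> real \<Rightarrow> real \<Rightarrow> real \<Rightarrow> bool \<Rightarrow> real \<Rightarrow> complex \<Rightarrow> complex" where
  "Rp x y z w b t = mob x y z w \<circ> Dm b t \<circ> mob w (-y) (-z) x"

lemma kap_facts:
  assumes "x * w - y * z = 1"
  shows "mob x y z w \<in> PSL2R" "mob w (-y) (-z) x \<in> PSL2R"
    "mob x y z w \<circ> mob w (-y) (-z) x = id" "mob w (-y) (-z) x \<circ> mob x y z w = id"
  using assms mob_inv_comp[OF assms] by (auto intro!: mob_in simp: algebra_simps)

lemma Rp_in: "x * w - y * z = 1 \<Longrightarrow> 0 < t \<Longrightarrow> Rp x y z w b t \<in> PSL2R"
  unfolding Rp_def using kap_facts Dm_in by (blast intro: P_comp)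

lemma Rp_conj:
  assumes "x * w - y * z = 1"
  shows "mob w (-y) (-z) x \<circ> Rp x y z w b t \<circ> mob x y z w = Dm b t"
proof -
  note k = kap_facts[OF assms]
  have "mob w (-y) (-z) x \<circ> Rp x y z w b t \<circ> mob x y z w =
     (mob w (-y) (-z) x \<circ> mob x y z w) \<circ> Dm b t \<circ> (mob w (-y) (-z) x \<circ> mob x y z w)"
    unfolding Rp_def by (simp only: comp_assoc)
  also have "\<dots> = Dm b t" using k by simp
  finally show ?thesis .
qed

lemma Rp_inj:
  assumes "x * w - y * z = 1" "0 < t" "0 < t'" "Rp x y z w b t = Rp x y z w b' t'"
  shows "b = b' \<and> t = t'"
proof -
  have "Dm b t = Dm b' t'" using Rp_conj[OF assms(1), of b t] Rp_conj[OF assms(1), of b' t'] assms(4) by simp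
  then show ?thesis using Dm_inj assms(2,3) by blast
qed

lemma Rp_comp:
  assumes "x * w - y * z = 1" "0 < t" "0 < t'"
  shows "Rp x y z w b t \<circ> Rp x y z w b' t' = Rp x y z w (b \<noteq> b') (if b then t / t' else t * t')"
proof -
  note k = kap_facts[OF assms(1)]
  have "Rp x y z w b t \<circ> Rp x y z w b' t' =
     mob x y z w \<circ> Dm b t \<circ> (mob w (-y) (-z) x \<circ> mob x y z w) \<circ> Dm b' t' \<circ> mob w (-y) (-z) x"
    unfolding Rp_def by (simp only: comp_assoc)
  also have "\<dots> = mob x y z w \<circ> (Dm b t \<circ> Dm b' t') \<circ> mob w (-y) (-z) x"
    using k by (simp add: comp_assoc)
  also have "\<dots> = Rp x y z w (b \<noteq> b') (if b then t / t' else t * t')"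
    unfolding Rp_def Dm_comp[OF assms(2,3)] ..
  finally show ?thesis .
qed

lemma Rp_one: "x * w - y * z = 1 \<Longrightarrow> Rp x y z w False 1 = id"
  unfolding Rp_def Dm_one using kap_facts by simp

lemma Rp_false:
  assumes "x * w - y * z = 1" "0 < t"
  shows "Rp x y z w False t = mob (x * w * t - y * z / t) (x * y / t - x * y * t)
              (z * w * t - z * w / t) (x * w / t - y * z * t)"
proof -
  have d1: "t * (1 / t) - 0 * 0 = 1" using assms by simp
  have d2: "(x * t + y * 0) * (z * 0 + w * (1 / t)) - (x * 0 + y * (1 / t)) * (z * t + w * 0) = 1"
    using assms by (simp add: field_simps)
  have d3: "w * x - (-y) * (-z) = 1" using assms by (simp add: algebra_simps)
  have "Rp x y z w False t = mob (x * t + y * 0) (x * 0 + y * (1 / t)) (z * t + w * 0) (z * 0 + w * (1 / t))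
      \<circ> mob w (-y) (-z) x"
    unfolding Rp_def Dm_def using mob_comp[OF assms(1) d1] by simp
  also have "\<dots> = mob (x * w * t - y * z / t) (x * y / t - x * y * t)
              (z * w * t - z * w / t) (x * w / t - y * z * t)"
    unfolding mob_comp[OF d2 d3] by (simp add: algebra_simps)
  finally show ?thesis .
qed


lemma cancelL: "a \<circ> b = id \<Longrightarrow> a \<circ> (b \<circ> h) = h"
  by (simp add: o_assoc)

theorem lemma3p6:
  fixes \<Gamma> :: "(complex \<Rightarrow> complex) set" and c \<gamma> :: "complex \<Rightarrow> complex"
  assumes "real_fuchsian \<Gamma> c" and "\<gamma> \<in> \<Gamma>" and "admissible c \<gamma>"
  shows "twisted_centralizer \<Gamma> c \<gamma> = {id} \<or>
         PSL2R_group\<lparr>carrier := twisted_centralizer \<Gamma> c \<gamma>\<rparr> \<cong> integer_mod_group 2 \<or>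
         PSL2R_group\<lparr>carrier := twisted_centralizer \<Gamma> c \<gamma>\<rparr> \<cong> integer_group \<or>
         PSL2R_group\<lparr>carrier := twisted_centralizer \<Gamma> c \<gamma>\<rparr> \<cong> inf_dihedral_group"
proof -
  have sg: "subgroup \<Gamma> PSL2R_group" and disc: "discrete_psl \<Gamma>" and cc: "complex_conjugation c"
    using assms(1) unfolding real_fuchsian_def by auto
  have \<Gamma>P: "g \<in> PSL2R" if "g \<in> \<Gamma>" for g using subgroup.subset[OF sg] that by auto
  have \<gamma>P: "\<gamma> \<in> PSL2R" using \<Gamma>P assms(2) .
  obtain f where fP: "f \<in> PSL2R" and cf: "\<And>z. 0 < Im z \<Longrightarrow> c z = - cnj (f z)"
    using cc_form[OF cc] by blast
  have ff: "st f \<circ> f = id"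
  proof -
    have "twist c id = st (f \<circ> id) \<circ> f" by (rule twist_form[OF cf fP P_id])
    moreover have "twist c id = id"
    proof
      fix z :: complex
      have "c (c z) = z" if "0 < Im z" using cc that unfolding complex_conjugation_def uhp_def by auto
      then show "twist c id z = id z" by (simp add: twist_def)
    qed
    ultimately show ?thesis by simp
  qed
  have stfP: "st f \<in> PSL2R" using st_in[OF fP] .
  have fst: "f \<circ> st f = id"
    using P_inv_unique[OF fP stfP ff] P_rinv[OF fP] by simp
  define \<eta> where "\<eta> = f \<circ> \<gamma>"
  have \<eta>P: "\<eta> \<in> PSL2R" unfolding \<eta>_def using P_comp[OF fP \<gamma>P] .
  have adm: "twist c \<gamma> = inv\<^bsub>PSL2R_group\<^esub> \<gamma>" using assms(3) unfolding admissible_def .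
  have "st (f \<circ> \<gamma>) \<circ> f = inv\<^bsub>PSL2R_group\<^esub> \<gamma>" using twist_form[OF cf fP \<gamma>P] adm by simp
  then have inv_eta: "st \<eta> \<circ> \<eta> = id"
    unfolding \<eta>_def using P_linv[OF \<gamma>P] by (simp add: o_assoc)
  have Zc1: "\<sigma> \<in> twisted_centralizer \<Gamma> c \<gamma> \<longleftrightarrow> \<sigma> \<in> \<Gamma> \<and> st \<sigma> \<circ> \<eta> = \<eta> \<circ> \<sigma>" for \<sigma>
  proof (cases "\<sigma> \<in> \<Gamma>")
    case False then show ?thesis by (simp add: twisted_centralizer_def)
  next
    case True
    have sP: "\<sigma> \<in> PSL2R" using \<Gamma>P[OF True] .
    define \<iota> where "\<iota> = inv\<^bsub>PSL2R_group\<^esub> \<sigma>"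
    have li: "\<iota> \<circ> \<sigma> = id" "\<sigma> \<circ> \<iota> = id" unfolding \<iota>_def using P_linv[OF sP] P_rinv[OF sP] by auto
    have tw: "twist c \<sigma> = st f \<circ> st \<sigma> \<circ> f"
      using twist_form[OF cf fP sP] st_comp[OF fP sP] by simp
    have "\<sigma> \<in> twisted_centralizer \<Gamma> c \<gamma> \<longleftrightarrow> st f \<circ> st \<sigma> \<circ> f \<circ> \<gamma> \<circ> \<iota> = \<gamma>"
      using True tw unfolding twisted_centralizer_def \<iota>_def by simp
    also have "\<dots> \<longleftrightarrow> st \<sigma> \<circ> \<eta> = \<eta> \<circ> \<sigma>"
    proof
      assume E: "st f \<circ> st \<sigma> \<circ> f \<circ> \<gamma> \<circ> \<iota> = \<gamma>"
      have "st \<sigma> \<circ> \<eta> = (f \<circ> st f) \<circ> st \<sigma> \<circ> (f \<circ> \<gamma>) \<circ> (\<iota> \<circ> \<sigma>)"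
        using fst li unfolding \<eta>_def by simp
      also have "\<dots> = f \<circ> (st f \<circ> st \<sigma> \<circ> f \<circ> \<gamma> \<circ> \<iota>) \<circ> \<sigma>" by (simp only: comp_assoc)
      also have "\<dots> = \<eta> \<circ> \<sigma>" by (simp only: E) (simp only: \<eta>_def comp_assoc)
      finally show "st \<sigma> \<circ> \<eta> = \<eta> \<circ> \<sigma>" .
    next
      assume E: "st \<sigma> \<circ> \<eta> = \<eta> \<circ> \<sigma>"
      have "st f \<circ> st \<sigma> \<circ> f \<circ> \<gamma> \<circ> \<iota> = st f \<circ> (st \<sigma> \<circ> \<eta>) \<circ> \<iota>"
        unfolding \<eta>_def by (simp only: comp_assoc)
      also have "\<dots> = (st f \<circ> f) \<circ> \<gamma> \<circ> (\<sigma> \<circ> \<iota>)" by (simp only: E) (simp only: \<eta>_def comp_assoc)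
      also have "\<dots> = \<gamma>" using ff li by simp
      finally show "st f \<circ> st \<sigma> \<circ> f \<circ> \<gamma> \<circ> \<iota> = \<gamma>" .
    qed
    finally show ?thesis using True by simp
  qed
  obtain A B C D where detH: "A * D - B * C = 1" and \<eta>m: "\<eta> = mob A B C D"
    using \<eta>P by (rule PSL2R_E)
  have detH': "A * D - (-B) * (-C) = 1" using detH by simp
  have dprod: "(A * A + (-B) * C) * ((-C) * B + D * D) - (A * B + (-B) * D) * ((-C) * A + D * C) = 1"
  proof -
    have "(A * A + (-B) * C) * ((-C) * B + D * D) - (A * B + (-B) * D) * ((-C) * A + D * C)
        = (A * D - B * C) * (A * D - B * C)" by (simp add: algebra_simps)
    then show ?thesis using detH by simp
  qed
  have "mob (A * A + (-B) * C) (A * B + (-B) * D) ((-C) * A + D * C) ((-C) * B + D * D) = id"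
    using inv_eta mob_comp[OF detH' detH] unfolding \<eta>m st_mob by simp
  then have pr: "A * B + (-B) * D = 0" "(-C) * A + D * C = 0" "(-C) * B + D * D = A * A + (-B) * C"
    using mob_eq_id[OF dprod] by auto
  have AD: "A = D"
  proof (rule ccontr)
    assume nAD: "A \<noteq> D"
    have "B * (A - D) = 0" using pr(1) by (simp add: algebra_simps)
    then have B0: "B = 0" using nAD by simp
    have "C * (D - A) = 0" using pr(2) by (simp add: algebra_simps)
    then have C0: "C = 0" using nAD by simp
    have "(A - D) * (A + D) = 0" using pr(3) B0 C0 by (simp add: algebra_simps)
    then have "A = - D" using nAD by simp
    then show False using detH B0 C0 by (simp add: algebra_simps) (smt (verit) zero_le_square)
  qed
  have hA: "A * A - B * C = 1" using detH AD by simp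
  obtain x y z w e where dK: "x * w - y * z = 1" and ee: "e = 1 \<or> e = -1"
    and eA: "A = e * (x * w + y * z)" and eB: "B = e * (-2 * x * y)" and eC: "C = e * (-2 * z * w)"
    using K_exists[OF hA] by blast
  define \<kappa> where "\<kappa> = mob x y z w"
  define \<iota> where "\<iota> = mob w (-y) (-z) x"
  note kf = kap_facts[OF dK, folded \<kappa>_def \<iota>_def]
  have dK1: "x * w - (-y) * (-z) = 1" using dK by simp
  have dK2: "w * x - (-y) * (-z) = 1" using dK by (simp add: algebra_simps)
  have \<eta>K: "\<eta> = st \<kappa> \<circ> \<iota>"
  proof -
    have "st \<kappa> \<circ> \<iota> = mob (x * w + y * z) (-2 * x * y) (-2 * z * w) (x * w + y * z)"
      unfolding \<kappa>_def \<iota>_def st_mob mob_comp[OF dK1 dK2] by (simp add: algebra_simps)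
    moreover have "\<eta> = mob (x * w + y * z) (-2 * x * y) (-2 * z * w) (x * w + y * z)"
      using ee
    proof
      assume "e = 1" then show ?thesis using eA eB eC AD \<eta>m by simp
    next
      assume "e = -1"
      then have "\<eta> = mob (- (x * w + y * z)) (- (-2 * x * y)) (- (-2 * z * w)) (- (x * w + y * z))"
        using eA eB eC AD \<eta>m by simp
      then show ?thesis by (simp only: mob_neg)
    qed
    ultimately show ?thesis by simp
  qed
  have sk: "st \<kappa> \<in> PSL2R" using st_in kf(1) by blast
  have si: "st \<iota> \<in> PSL2R" using st_in kf(2) by blast
  have ski: "st \<kappa> \<circ> st \<iota> = id" using st_comp[OF kf(1,2)] kf(3) st_id by simp
  have sik: "st \<iota> \<circ> st \<kappa> = id" using st_comp[OF kf(2,1)] kf(4) st_id by simp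
  have Zc2: "st \<sigma> \<circ> \<eta> = \<eta> \<circ> \<sigma> \<longleftrightarrow> st (\<iota> \<circ> \<sigma> \<circ> \<kappa>) = \<iota> \<circ> \<sigma> \<circ> \<kappa>" if sP: "\<sigma> \<in> PSL2R" for \<sigma>
  proof -
    have stc: "st (\<iota> \<circ> \<sigma> \<circ> \<kappa>) = st \<iota> \<circ> st \<sigma> \<circ> st \<kappa>"
      using st_comp[OF P_comp[OF kf(2) sP] kf(1)] st_comp[OF kf(2) sP] by simp
    show ?thesis
    proof
      assume E: "st \<sigma> \<circ> \<eta> = \<eta> \<circ> \<sigma>"
      have "st (\<iota> \<circ> \<sigma> \<circ> \<kappa>) = st \<iota> \<circ> st \<sigma> \<circ> st \<kappa> \<circ> (\<iota> \<circ> \<kappa>)" using stc kf(4) by simp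
      also have "\<dots> = st \<iota> \<circ> (st \<sigma> \<circ> \<eta>) \<circ> \<kappa>" unfolding \<eta>K by (simp only: comp_assoc)
      also have "\<dots> = (st \<iota> \<circ> st \<kappa>) \<circ> \<iota> \<circ> \<sigma> \<circ> \<kappa>" by (simp only: E) (simp only: \<eta>K comp_assoc)
      also have "\<dots> = \<iota> \<circ> \<sigma> \<circ> \<kappa>" using sik by simp
      finally show "st (\<iota> \<circ> \<sigma> \<circ> \<kappa>) = \<iota> \<circ> \<sigma> \<circ> \<kappa>" .
    next
      assume E: "st (\<iota> \<circ> \<sigma> \<circ> \<kappa>) = \<iota> \<circ> \<sigma> \<circ> \<kappa>"
      have "st \<sigma> \<circ> \<eta> = (st \<kappa> \<circ> st \<iota>) \<circ> st \<sigma> \<circ> st \<kappa> \<circ> \<iota>" using ski unfolding \<eta>K by (simp add: comp_assoc)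
      also have "\<dots> = st \<kappa> \<circ> st (\<iota> \<circ> \<sigma> \<circ> \<kappa>) \<circ> \<iota>" unfolding stc by (simp only: comp_assoc)
      also have "\<dots> = st \<kappa> \<circ> \<iota> \<circ> \<sigma> \<circ> (\<kappa> \<circ> \<iota>)" unfolding E by (simp only: comp_assoc)
      also have "\<dots> = \<eta> \<circ> \<sigma>" using kf(3) unfolding \<eta>K by simp
      finally show "st \<sigma> \<circ> \<eta> = \<eta> \<circ> \<sigma>" .
    qed
  qed
  define Rep where "Rep = Rp x y z w"
  have Zc3: "st (\<iota> \<circ> \<sigma> \<circ> \<kappa>) = \<iota> \<circ> \<sigma> \<circ> \<kappa> \<longleftrightarrow> (\<exists>b t. 0 < t \<and> \<sigma> = Rep b t)"
    if sP: "\<sigma> \<in> PSL2R" for \<sigma>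
  proof
    assume E: "st (\<iota> \<circ> \<sigma> \<circ> \<kappa>) = \<iota> \<circ> \<sigma> \<circ> \<kappa>"
    have XP: "\<iota> \<circ> \<sigma> \<circ> \<kappa> \<in> PSL2R" using P_comp[OF P_comp[OF kf(2) sP] kf(1)] .
    obtain a b cc d where "a * d - b * cc = 1" "\<iota> \<circ> \<sigma> \<circ> \<kappa> = mob a b cc d"
      using XP by (rule PSL2R_E)
    then obtain bb t where bt: "0 < t" "\<iota> \<circ> \<sigma> \<circ> \<kappa> = Dm bb t" using st_fix E by metis
    have "\<sigma> = (\<kappa> \<circ> \<iota>) \<circ> \<sigma> \<circ> (\<kappa> \<circ> \<iota>)" using kf(3) by simp
    also have "\<dots> = \<kappa> \<circ> (\<iota> \<circ> \<sigma> \<circ> \<kappa>) \<circ> \<iota>" by (simp only: comp_assoc)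
    also have "\<dots> = Rep bb t" by (simp only: bt(2)) (simp only: Rep_def Rp_def \<kappa>_def \<iota>_def)
    finally show "\<exists>b t. 0 < t \<and> \<sigma> = Rep b t" using bt(1) by blast
  next
    assume "\<exists>b t. 0 < t \<and> \<sigma> = Rep b t"
    then obtain b t where bt: "0 < t" "\<sigma> = Rep b t" by blast
    have "\<iota> \<circ> \<sigma> \<circ> \<kappa> = Dm b t" using Rp_conj[OF dK, of b t] unfolding bt(2) Rep_def \<kappa>_def \<iota>_def .
    then show "st (\<iota> \<circ> \<sigma> \<circ> \<kappa>) = \<iota> \<circ> \<sigma> \<circ> \<kappa>" by (simp add: st_Dm)
  qed
  have Zdef: "twisted_centralizer \<Gamma> c \<gamma> = {\<sigma> \<in> \<Gamma>. \<exists>b t. 0 < t \<and> \<sigma> = Rep b t}"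
  proof (rule Set.set_eqI)
    fix \<sigma>
    show "\<sigma> \<in> twisted_centralizer \<Gamma> c \<gamma> \<longleftrightarrow> \<sigma> \<in> {\<sigma> \<in> \<Gamma>. \<exists>b t. 0 < t \<and> \<sigma> = Rep b t}"
    proof (cases "\<sigma> \<in> \<Gamma>")
      case True
      then show ?thesis using Zc1[of \<sigma>] Zc2[OF \<Gamma>P[OF True]] Zc3[OF \<Gamma>P[OF True]] by simp
    next
      case False
      then show ?thesis using Zc1[of \<sigma>] by simp
    qed
  qed
  obtain \<epsilon> where e0: "0 < \<epsilon>" and eps: "\<And>a b cc d. a * d - b * cc = 1 \<and> mob a b cc d \<in> \<Gamma> \<and>
      \<bar>a - 1\<bar> < \<epsilon> \<and> \<bar>b\<bar> < \<epsilon> \<and> \<bar>cc\<bar> < \<epsilon> \<and> \<bar>d - 1\<bar> < \<epsilon> \<Longrightarrow> mob a b cc d = id"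
    using disc unfolding discrete_psl_def by blast
  define e1 where "e1 t = x * w * t - y * z / t" for t :: real
  define e2 where "e2 t = x * y / t - x * y * t" for t :: real
  define e3 where "e3 t = z * w * t - z * w / t" for t :: real
  define e4 where "e4 t = x * w / t - y * z * t" for t :: real
  have c1: "isCont e1 1" unfolding e1_def by (intro continuous_intros) auto
  have c2: "isCont e2 1" unfolding e2_def by (intro continuous_intros) auto
  have c3: "isCont e3 1" unfolding e3_def by (intro continuous_intros) auto
  have c4: "isCont e4 1" unfolding e4_def by (intro continuous_intros) auto
  obtain d1 where d1: "0 < d1" "\<And>t. \<bar>t - 1\<bar> < d1 \<Longrightarrow> \<bar>e1 t - e1 1\<bar> < \<epsilon>" using LIM_delta[OF c1 e0] by blast
  obtain d2 where d2: "0 < d2" "\<And>t. \<bar>t - 1\<bar> < d2 \<Longrightarrow> \<bar>e2 t - e2 1\<bar> < \<epsilon>" using LIM_delta[OF c2 e0] by blast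
  obtain d3 where d3: "0 < d3" "\<And>t. \<bar>t - 1\<bar> < d3 \<Longrightarrow> \<bar>e3 t - e3 1\<bar> < \<epsilon>" using LIM_delta[OF c3 e0] by blast
  obtain d4 where d4: "0 < d4" "\<And>t. \<bar>t - 1\<bar> < d4 \<Longrightarrow> \<bar>e4 t - e4 1\<bar> < \<epsilon>" using LIM_delta[OF c4 e0] by blast
  define \<delta> where "\<delta> = min (min d1 d2) (min d3 d4)"
  have \<delta>0: "0 < \<delta>" using d1 d2 d3 d4 by (simp add: \<delta>_def)
  have e11: "e1 1 = 1" "e2 1 = 0" "e3 1 = 0" "e4 1 = 1" using dK by (simp_all add: e1_def e2_def e3_def e4_def)
  have discR: "t = 1" if t: "0 < t" "\<bar>t - 1\<bar> < \<delta>" "Rep False t \<in> \<Gamma>" for t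
  proof -
    have Rf: "Rep False t = mob (e1 t) (e2 t) (e3 t) (e4 t)"
      unfolding Rep_def e1_def e2_def e3_def e4_def by (rule Rp_false[OF dK t(1)])
    have det: "e1 t * e4 t - e2 t * e3 t = 1"
    proof -
      have "e1 t * e4 t - e2 t * e3 t = (x * w - y * z) * (x * w - y * z)"
        using t(1) by (simp add: e1_def e2_def e3_def e4_def field_simps)
      then show ?thesis using dK by simp
    qed
    have "mob (e1 t) (e2 t) (e3 t) (e4 t) = id"
      apply (rule eps)
      using det Rf t d1(2)[of t] d2(2)[of t] d3(2)[of t] d4(2)[of t] e11 by (auto simp: \<delta>_def)
    then have "Rep False t = Rep False 1" using Rf Rp_one[OF dK] by (simp add: Rep_def)
    then show "t = 1" using Rp_inj[OF dK t(1)] unfolding Rep_def by auto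
  qed
  show ?thesis
    apply (rule final_struct[OF sg _ _ _ _ \<delta>0 discR Zdef])
    using Rp_in[OF dK] Rp_inj[OF dK] Rp_comp[OF dK] Rp_one[OF dK] unfolding Rep_def by auto
qed

end
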